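(* Let $F:\mathbb{R}^n\to\mathbb{R}^n$ be locally Lipschitz, $X^*=\{x:F(x)=0\}$, $\mathcal{M}$ a smooth embedded submanifold of $\mathbb{R}^n$, and $\tilde X^*=X^*\cap\mathcal{M}$. Let $q\in(1,2]$, $L_3>0$, and consider the projected semismooth Newton iteration started at $x_0\in\mathcal{M}$: $$(J_kP_k+\mu_kI)d_k=-F(x_k)+r_k,\qquad x_{k+1}=P_{\mathcal{M}}(x_k+d_k),$$ where $J_k\in\partial_BF(x_k)$, $P_k=P(x_k)$, $\mu_k=\|F(x_k)\|$, and $\|r_k\|/\mu_k\le L_3\|F(x_k)\|^q$. Let $x^*$ be a point of $\tilde X^*$ nearest to $x_0$, and suppose that (A1), (A2), (A3) below hold at $x^*$. If $x_0$ is chosen sufficiently close to $\tilde X^*$, then $\{x_k\}$ converges superlinearly to some solution $\hat x\in\tilde X^*$ of $F(x)=0$.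
   Context: $\partial_BF(x)=\{\lim_kJ(x^k):x^k\to x, F \text{ differentiable at } x^k\}$ (B-Jacobian). $P(x)$ is the matrix of the orthogonal projection onto the tangent space $T_x\mathcal{M}$; $P_{\mathcal{M}}$ is the metric projection onto $\mathcal{M}$. (A1) at $x^*$: there are $b_1>0$, $L_2>0$ such that $F$ is $L_2$-Lipschitz on $\bar B(x^*,b_1)$, and a constant $L_1>0$ such that $\|F(y)-F(x)-J(x)(y-x)\|\le L_1\|y-x\|^2$ for all $x,y\in\mathcal{M}\cap\bar B(x^*,b_1)$ and every $J(x)\in\partial_BF(x)$. (A2) at $x^*$: there is $b_2>0$ such that for all $x\in\mathcal{M}\cap\bar B(x^*,b_2)$ and all $J(x)\in\partial_BF(x)$, $\|(J(x)P(x)+\mu(x)I)^{-1}\|\le\mu(x)^{-1}$, where $\mu(x)=\|F(x)\|$. (A3) at $x^*$: there are $b_3>0$, $\gamma>0$ with $\|F(x)\|\ge\gamma\,\mathrm{dist}(x,\tilde X^* )$ for all $x\in\mathcal{M}\cap\bar B(x^*,b_3)$. Superlinear convergence here means $\|x_{k+1}-\hat x\|=o(\|x_k-\hat x\|)$. *)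

theory Defs
  imports "HOL-Analysis.Analysis" "HOL-Library.Landau_Symbols"
begin

fun Ck_on :: "nat \<Rightarrow> 'a::euclidean_space set \<Rightarrow> ('a \<Rightarrow> 'b::euclidean_space) \<Rightarrow> bool" where
  "Ck_on 0 U f = continuous_on U f"
| "Ck_on (Suc k) U f = (f differentiable_on U \<and>
      (\<forall>v. Ck_on k U (\<lambda>x. frechet_derivative f (at x) v)))"

definition smooth_on :: "'a::euclidean_space set \<Rightarrow> ('a \<Rightarrow> 'b::euclidean_space) \<Rightarrow> bool" where
  "smooth_on U f \<longleftrightarrow> (\<forall>k. Ck_on k U f)"

definition smooth_embedded_submanifold :: "(real^'n) set \<Rightarrow> bool" where
  "smooth_embedded_submanifold M \<longleftrightarrow>
     (\<forall>p\<in>M. \<exists>U V (\<phi>::real^'n \<Rightarrow> real^'n) \<psi> S.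
        open U \<and> p \<in> U \<and> open V \<and> subspace S \<and>
        smooth_on U \<phi> \<and> smooth_on V \<psi> \<and> \<phi> ` U = V \<and>
        (\<forall>x\<in>U. \<psi> (\<phi> x) = x) \<and> (\<forall>y\<in>V. \<phi> (\<psi> y) = y) \<and>
        \<phi> ` (M \<inter> U) = V \<inter> S)"

definition tangent_space :: "(real^'n) set \<Rightarrow> real^'n \<Rightarrow> (real^'n) set" where
  "tangent_space M x = {v. \<exists>\<gamma> e. e > 0 \<and> (\<forall>t\<in>ball 0 e. \<gamma> t \<in> M) \<and> \<gamma> 0 = x \<and>
        (\<gamma> has_vector_derivative v) (at 0)}"

definition tangent_proj :: "(real^'n) set \<Rightarrow> real^'n \<Rightarrow> real^'n^'n" where
  "tangent_proj M x = matrix (\<lambda>v. THE p. p \<in> tangent_space M x \<and>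
        (\<forall>w\<in>tangent_space M x. (v - p) \<bullet> w = 0))"

definition B_jac :: "(real^'n \<Rightarrow> real^'n) \<Rightarrow> real^'n \<Rightarrow> (real^'n^'n) set" where
  "B_jac F x = {J. \<exists>xs. xs \<longlonglongrightarrow> x \<and> (\<forall>k. F differentiable (at (xs k))) \<and>
        (\<lambda>k. matrix (frechet_derivative F (at (xs k)))) \<longlonglongrightarrow> J}"

definition locally_lipschitz :: "(real^'n \<Rightarrow> real^'m) \<Rightarrow> bool" where
  "locally_lipschitz F \<longleftrightarrow> (\<forall>x. \<exists>e>0. \<exists>L. L-lipschitz_on (cball x e) F)"

definition mnorm :: "real^'n^'m \<Rightarrow> real" where
  "mnorm A = onorm (\<lambda>v. A *v v)"

definition A1 :: "(real^'n \<Rightarrow> real^'n) \<Rightarrow> (real^'n) set \<Rightarrow> real^'n \<Rightarrow> bool" where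
  "A1 F M xs \<longleftrightarrow> (\<exists>b1>0. \<exists>L2>0. L2-lipschitz_on (cball xs b1) F \<and>
     (\<exists>L1>0. \<forall>x\<in>M \<inter> cball xs b1. \<forall>y\<in>M \<inter> cball xs b1. \<forall>J\<in>B_jac F x.
        norm (F y - F x - J *v (y - x)) \<le> L1 * (norm (y - x))\<^sup>2))"

definition A2 :: "(real^'n \<Rightarrow> real^'n) \<Rightarrow> (real^'n) set \<Rightarrow> real^'n \<Rightarrow> bool" where
  "A2 F M xs \<longleftrightarrow> (\<exists>b2>0. \<forall>x\<in>M \<inter> cball xs b2. \<forall>J\<in>B_jac F x. F x \<noteq> 0 \<longrightarrow>
     invertible (J ** tangent_proj M x + norm (F x) *\<^sub>R mat 1) \<and>
     mnorm (matrix_inv (J ** tangent_proj M x + norm (F x) *\<^sub>R mat 1)) \<le> 1 / norm (F x))"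

definition A3 :: "(real^'n \<Rightarrow> real^'n) \<Rightarrow> (real^'n) set \<Rightarrow> real^'n \<Rightarrow> bool" where
  "A3 F M xs \<longleftrightarrow> (\<exists>b3>0. \<exists>\<gamma>>0. \<forall>x\<in>M \<inter> cball xs b3.
     norm (F x) \<ge> \<gamma> * infdist x ({z. F z = 0} \<inter> M))"

end

theory Submission
  imports Defs
begin


definition projT :: "(real^'n) set \<Rightarrow> real^'n \<Rightarrow> real^'n" where
  "projT T v = (THE p. p \<in> T \<and> (\<forall>w\<in>T. (v - p) \<bullet> w = 0))"

lemma projT_unique:
  assumes T: "subspace T" and p: "p \<in> T" "\<forall>w\<in>T. (v - p) \<bullet> w = 0"
  shows "projT T v = p"
  unfolding projT_def
proof (rule the_equality)
  show "p \<in> T \<and> (\<forall>w\<in>T. (v - p) \<bullet> w = 0)" using p by auto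
next
  fix p' assume h: "p' \<in> T \<and> (\<forall>w\<in>T. (v - p') \<bullet> w = 0)"
  have d: "p' - p \<in> T" using h p T by (simp add: subspace_diff)
  have "(v - p) \<bullet> (p' - p) = 0" "(v - p') \<bullet> (p' - p) = 0" using p h d by auto
  then have "(p' - p) \<bullet> (p' - p) = 0" by (simp add: inner_diff_left inner_diff_right)
  then show "p' = p" by simp
qed

lemma projT_ex:
  assumes T: "subspace T"
  shows "projT T v \<in> T \<and> (\<forall>w\<in>T. (v - projT T v) \<bullet> w = 0)"
proof -
  obtain y z where y: "y \<in> span T" and z: "\<And>w. w \<in> span T \<Longrightarrow> orthogonal z w" and e: "v = y + z"
    using orthogonal_subspace_decomp_exists by blast
  have yT: "y \<in> T" using y T by (metis span_eq_iff)
  have "\<forall>w\<in>T. (v - y) \<bullet> w = 0" using z e by (auto simp: orthogonal_def span_base)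
  with yT have "projT T v = y" using projT_unique[OF T] by blast
  then show ?thesis using yT \<open>\<forall>w\<in>T. (v - y) \<bullet> w = 0\<close> by simp
qed

lemma projT_linear:
  assumes T: "subspace T"
  shows "linear (projT T)"
proof (rule linearI)
  fix a b
  show "projT T (a + b) = projT T a + projT T b"
    apply (rule projT_unique[OF T])
    using projT_ex[OF T, of a] projT_ex[OF T, of b] T
    by (auto simp: subspace_add algebra_simps inner_diff_left inner_add_left)
next
  fix c :: real and a
  show "projT T (c *\<^sub>R a) = c *\<^sub>R projT T a"
    apply (rule projT_unique[OF T])
    using projT_ex[OF T, of a] T
    by (auto simp: subspace_scale algebra_simps inner_diff_left
       simp flip: scaleR_diff_right)
qed

lemma tangent_proj_eq:
  assumes "subspace (tangent_space M x)"
  shows "tangent_proj M x *v v = projT (tangent_space M x) v"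
proof -
  have "tangent_proj M x = matrix (projT (tangent_space M x))"
    unfolding tangent_proj_def projT_def by simp
  then show ?thesis using matrix_vector_mul(2)[OF projT_linear[OF assms]] by (metis)
qed

lemma projT_norm:
  assumes T: "subspace T"
  shows "norm (projT T v) \<le> norm v"
proof -
  have o: "(v - projT T v) \<bullet> projT T v = 0" using projT_ex[OF T] by blast
  have "norm v ^ 2 = norm (projT T v) ^ 2 + norm (v - projT T v) ^ 2"
    using norm_add_Pythagorean[of "projT T v" "v - projT T v"] o
    by (simp add: orthogonal_def inner_commute)
  then have "norm (projT T v) ^ 2 \<le> norm v ^ 2" by simp
  then show ?thesis by (simp add: power2_le_iff_abs_le)
qed

lemma projT_best:
  assumes T: "subspace T" and t: "t \<in> T"
  shows "norm (v - projT T v) \<le> norm (v - t)"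
proof -
  have pt: "projT T v - t \<in> T" using projT_ex[OF T] t T by (simp add: subspace_diff)
  have o: "(v - projT T v) \<bullet> (projT T v - t) = 0" using projT_ex[OF T] pt by blast
  have "v - t = (v - projT T v) + (projT T v - t)" by simp
  then have "norm (v - t) ^ 2 = norm (v - projT T v) ^ 2 + norm (projT T v - t) ^ 2"
    using norm_add_Pythagorean[of "v - projT T v" "projT T v - t"] o
    by (simp add: orthogonal_def)
  then have "norm (v - projT T v) ^ 2 \<le> norm (v - t) ^ 2" by simp
  then show ?thesis by (simp add: power2_le_iff_abs_le)
qed

lemma projT_zero:
  assumes T: "subspace T" and u: "\<forall>w\<in>T. u \<bullet> w = 0"
  shows "projT T u = 0"
  by (rule projT_unique[OF T]) (use u T in \<open>auto simp: subspace_0\<close>)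

lemma projT_sq:
  assumes T: "subspace T"
  shows "norm (projT T u) ^ 2 = projT T u \<bullet> u"
proof -
  have "(u - projT T u) \<bullet> projT T u = 0" using projT_ex[OF T] by blast
  then have "projT T u \<bullet> projT T u = u \<bullet> projT T u" by (simp add: inner_diff_left)
  then show ?thesis by (simp add: inner_commute power2_norm_eq_inner)
qed



lemma linear_basis_bound:
  fixes f :: "real^'n \<Rightarrow> real^'m"
  assumes "linear f"
  shows "norm (f w) \<le> (\<Sum>i\<in>UNIV. norm (f (axis i 1))) * norm w"
proof -
  have e: "w = (\<Sum>i\<in>UNIV. w $ i *\<^sub>R axis i 1)"
    using basis_expansion[of w] by (simp add: scalar_mult_eq_scaleR)
  have "f (\<Sum>i\<in>UNIV. w $ i *\<^sub>R axis i 1) = (\<Sum>i\<in>UNIV. w $ i *\<^sub>R f (axis i 1))"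
    by (simp add: linear_sum[OF assms] linear_scale[OF assms] o_def)
  then have "f w = (\<Sum>i\<in>UNIV. w $ i *\<^sub>R f (axis i 1))" using e by metis
  then have "norm (f w) \<le> (\<Sum>i\<in>UNIV. norm (w $ i *\<^sub>R f (axis i 1)))"
    using norm_sum[of "\<lambda>i. w $ i *\<^sub>R f (axis i 1)" UNIV] by simp
  also have "\<dots> \<le> (\<Sum>i\<in>UNIV. norm w * norm (f (axis i 1)))"
    by (rule sum_mono) (simp add: component_le_norm_cart mult_right_mono)
  finally show ?thesis by (simp add: sum_distrib_left mult.commute)
qed

lemma deriv_at_open:
  assumes "g differentiable_on U" "open U" "x \<in> U"
  shows "(g has_derivative frechet_derivative g (at x)) (at x)"
  using assms differentiable_on_eq_differentiable_at frechet_derivative_works by blast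

lemma linear_fd:
  assumes "g differentiable_on U" "open U" "x \<in> U"
  shows "linear (frechet_derivative g (at x))"
  using deriv_at_open[OF assms] has_derivative_linear by blast

lemma deriv_bounded:
  fixes g :: "real^'n \<Rightarrow> real^'m"
  assumes g: "g differentiable_on U" and U: "open U" and K: "compact K" "K \<subseteq> U"
    and c: "\<And>w. continuous_on U (\<lambda>x. frechet_derivative g (at x) w)"
  shows "\<exists>B\<ge>0. \<forall>x\<in>K. \<forall>w. norm (frechet_derivative g (at x) w) \<le> B * norm w"
proof -
  have "\<forall>i. \<exists>B. \<forall>x\<in>K. norm (frechet_derivative g (at x) (axis i 1)) \<le> B"
  proof
    fix i
    have "continuous_on K (\<lambda>x. frechet_derivative g (at x) (axis i 1))"
      using c K continuous_on_subset by blast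
    then have "compact ((\<lambda>x. frechet_derivative g (at x) (axis i 1)) ` K)"
      using K compact_continuous_image by blast
    then show "\<exists>B. \<forall>x\<in>K. norm (frechet_derivative g (at x) (axis i 1)) \<le> B"
      by (auto dest!: compact_imp_bounded simp: bounded_iff)
  qed
  then obtain Bf where Bf0: "\<forall>i. \<forall>x\<in>K. norm (frechet_derivative g (at x) (axis i 1)) \<le> Bf i"
    by (rule choice[THEN exE]) 
  then have Bf: "\<And>i x. x \<in> K \<Longrightarrow> norm (frechet_derivative g (at x) (axis i 1)) \<le> Bf i" by blast
  define B where "B = (\<Sum>i\<in>UNIV. max 0 (Bf i))"
  have "B \<ge> 0" unfolding B_def by (simp add: sum_nonneg)
  moreover have "norm (frechet_derivative g (at x) w) \<le> B * norm w" if "x \<in> K" for x w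
  proof -
    have "norm (frechet_derivative g (at x) w) \<le> (\<Sum>i\<in>UNIV. norm (frechet_derivative g (at x) (axis i 1))) * norm w"
      by (rule linear_basis_bound[OF linear_fd[OF g U]]) (use that K in auto)
    also have "\<dots> \<le> B * norm w"
    proof -
      have "\<And>i. norm (frechet_derivative g (at x) (axis i 1)) \<le> max 0 (Bf i)"
        using Bf[OF that] by (meson max.coboundedI2)
      then have "(\<Sum>i\<in>UNIV. norm (frechet_derivative g (at x) (axis i 1))) \<le> B"
        unfolding B_def by (rule sum_mono)
      then show ?thesis by (rule mult_right_mono) simp
    qed
    finally show ?thesis .
  qed
  ultimately show ?thesis by blast
qed

lemma lipschitz_from_deriv:
  fixes g :: "real^'n \<Rightarrow> real^'m"
  assumes g: "g differentiable_on U" and U: "open U" and C: "convex C" "C \<subseteq> U"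
    and B: "\<And>x w. x \<in> C \<Longrightarrow> norm (frechet_derivative g (at x) w) \<le> B * norm w"
    and x: "x \<in> C" and y: "y \<in> C"
  shows "norm (g x - g y) \<le> B * norm (x - y)"
proof (rule differentiable_bound[OF C(1) _ _ x y])
  fix z assume "z \<in> C"
  then show "(g has_derivative frechet_derivative g (at z)) (at z within C)"
    using deriv_at_open[OF g U] C has_derivative_at_withinI by blast
next
  fix z assume "z \<in> C"
  then show "onorm (frechet_derivative g (at z)) \<le> B"
    using B by (intro onorm_le) auto
qed

lemma inv_deriv:
  fixes f :: "real^'n \<Rightarrow> real^'n"
  assumes U: "open U" "x \<in> U" and inv: "\<And>y. y \<in> U \<Longrightarrow> g (f y) = y"
    and df: "(f has_derivative f') (at x)" and dg: "(g has_derivative g') (at (f x))"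
  shows "g' (f' v) = v"
proof -
  have "((g \<circ> f) has_derivative (g' \<circ> f')) (at x)" using diff_chain_at[OF df dg] .
  then have "((\<lambda>y. y) has_derivative (g' \<circ> f')) (at x)"
    by (rule has_derivative_transform_within_open[OF _ U]) (use inv in auto)
  then have "(g' \<circ> f') = (\<lambda>y. y)" using has_derivative_ident has_derivative_unique by blast
  then show ?thesis by (metis comp_apply)
qed

lemma smooth_C2:
  assumes "smooth_on U f"
  shows "f differentiable_on U" "\<And>v. (\<lambda>x. frechet_derivative f (at x) v) differentiable_on U"
    "\<And>v w. continuous_on U (\<lambda>x. frechet_derivative (\<lambda>y. frechet_derivative f (at y) v) (at x) w)"
proof -
  have "Ck_on (Suc (Suc 0)) U f" using assms unfolding smooth_on_def by blast
  then show "f differentiable_on U" "\<And>v. (\<lambda>x. frechet_derivative f (at x) v) differentiable_on U"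
    "\<And>v w. continuous_on U (\<lambda>x. frechet_derivative (\<lambda>y. frechet_derivative f (at y) v) (at x) w)"
    by (simp_all add: numeral_2_eq_2)
qed

lemma nearest_orth:
  fixes M :: "(real^'n) set"
  assumes z: "z \<in> M" and near: "\<And>m. m \<in> M \<Longrightarrow> norm (w - z) \<le> norm (w - m)"
    and v: "v \<in> tangent_space M z"
  shows "(w - z) \<bullet> v = 0"
proof -
  obtain \<gamma> e where e: "e > 0" and inM: "\<And>t. t \<in> ball 0 e \<Longrightarrow> \<gamma> t \<in> M" and g0: "\<gamma> 0 = z"
    and dg: "(\<gamma> has_vector_derivative v) (at 0)"
    using v unfolding tangent_space_def by blast
  have dg': "(\<gamma> has_derivative (\<lambda>t. t *\<^sub>R v)) (at 0)" using dg by (simp add: has_vector_derivative_def)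
  have dm: "((\<lambda>x. w - \<gamma> x) has_derivative (\<lambda>h. - (h *\<^sub>R v))) (at 0)"
    using has_derivative_diff[OF has_derivative_const dg'] by simp
  have "((\<lambda>t. (w - \<gamma> t) \<bullet> (w - \<gamma> t)) has_derivative
      (\<lambda>h. (w - \<gamma> 0) \<bullet> (- (h *\<^sub>R v)) + (- (h *\<^sub>R v)) \<bullet> (w - \<gamma> 0))) (at 0)"
    using has_derivative_inner[OF dm dm] .
  also have "(\<lambda>h. (w - \<gamma> 0) \<bullet> (- (h *\<^sub>R v)) + (- (h *\<^sub>R v)) \<bullet> (w - \<gamma> 0)) = (*) (- 2 * ((w - z) \<bullet> v))"
    by (auto simp: g0 inner_commute inner_minus_left inner_minus_right)
  finally have D0: "((\<lambda>t. (w - \<gamma> t) \<bullet> (w - \<gamma> t)) has_derivative (*) (- 2 * ((w - z) \<bullet> v))) (at 0)" .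
  have D: "((\<lambda>t. (w - \<gamma> t) \<bullet> (w - \<gamma> t)) has_field_derivative (- 2 * ((w - z) \<bullet> v))) (at 0)"
    unfolding has_field_derivative_def by (rule D0)
  have "- 2 * ((w - z) \<bullet> v) = 0"
  proof (rule DERIV_local_min[OF D e])
    show "\<forall>y. \<bar>0 - y\<bar> < e \<longrightarrow> (w - \<gamma> 0) \<bullet> (w - \<gamma> 0) \<le> (w - \<gamma> y) \<bullet> (w - \<gamma> y)"
    proof (intro allI impI)
      fix y :: real assume "\<bar>0 - y\<bar> < e"
      then have "\<gamma> y \<in> M" using inM by (simp add: dist_real_def)
      then have "norm (w - z) \<le> norm (w - \<gamma> y)" using near by blast
      then have "norm (w - z) ^ 2 \<le> norm (w - \<gamma> y) ^ 2" by (simp add: power_mono)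
      then show "(w - \<gamma> 0) \<bullet> (w - \<gamma> 0) \<le> (w - \<gamma> y) \<bullet> (w - \<gamma> y)"
        by (simp add: g0 power2_norm_eq_inner)
    qed
  qed
  then show ?thesis by simp
qed



lemma subspace_orth_mem:
  fixes S :: "(real^'n) set"
  assumes S: "subspace S" and h: "\<And>z. (\<forall>s\<in>S. z \<bullet> s = 0) \<Longrightarrow> z \<bullet> u = 0"
  shows "u \<in> S"
proof -
  obtain y z where y: "y \<in> span S" and z: "\<And>w. w \<in> span S \<Longrightarrow> orthogonal z w" and e: "u = y + z"
    using orthogonal_subspace_decomp_exists by blast
  have zS: "\<forall>s\<in>S. z \<bullet> s = 0" using z by (simp add: orthogonal_def span_base)
  have "z \<bullet> y = 0" using z y by (simp add: orthogonal_def)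
  moreover have "z \<bullet> u = 0" using h[OF zS] .
  ultimately have "z \<bullet> z = 0" using e by (simp add: inner_add_right)
  then have "z = 0" by simp
  then show ?thesis using e y S by (simp add: span_eq_iff) (metis span_eq_iff)
qed

lemma tangent_chart:
  fixes M :: "(real^'n) set" and \<phi> \<psi> :: "real^'n \<Rightarrow> real^'n"
  assumes U: "open U" and V: "open V" and S: "subspace S"
    and \<phi>d: "\<phi> differentiable_on U" and \<psi>d: "\<psi> differentiable_on V"
    and \<phi>U: "\<phi> ` U = V" and inv1: "\<forall>x\<in>U. \<psi> (\<phi> x) = x"
    and img: "\<phi> ` (M \<inter> U) = V \<inter> S" and x: "x \<in> M" "x \<in> U"
  shows "tangent_space M x = frechet_derivative \<psi> (at (\<phi> x)) ` S"
proof
  have \<phi>xV: "\<phi> x \<in> V" and \<phi>xS: "\<phi> x \<in> S" using img x by auto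
  have D\<phi>: "(\<phi> has_derivative frechet_derivative \<phi> (at x)) (at x)" using deriv_at_open[OF \<phi>d U x(2)] .
  have D\<psi>: "(\<psi> has_derivative frechet_derivative \<psi> (at (\<phi> x))) (at (\<phi> x))" using deriv_at_open[OF \<psi>d V \<phi>xV] .
  have id: "frechet_derivative \<psi> (at (\<phi> x)) (frechet_derivative \<phi> (at x) v) = v" for v
    by (rule inv_deriv[OF U x(2) _ D\<phi> D\<psi>]) (use inv1 in auto)
  show "tangent_space M x \<subseteq> frechet_derivative \<psi> (at (\<phi> x)) ` S"
  proof
    fix v assume "v \<in> tangent_space M x"
    then obtain \<gamma> e where e: "e > 0" and inM: "\<And>t. t \<in> ball 0 e \<Longrightarrow> \<gamma> t \<in> M" and g0: "\<gamma> 0 = x"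
      and dg: "(\<gamma> has_vector_derivative v) (at 0)"
      unfolding tangent_space_def by blast
    have dg': "(\<gamma> has_derivative (\<lambda>t. t *\<^sub>R v)) (at 0)" using dg by (simp add: has_vector_derivative_def)
    have "continuous (at 0) \<gamma>" using has_derivative_continuous[OF dg'] .
    then obtain Ob where Ob: "open Ob" "0 \<in> Ob" "\<And>t. t \<in> Ob \<Longrightarrow> \<gamma> t \<in> U"
      using U x(2) g0 unfolding continuous_at_open by metis
    define O' where "O' = Ob \<inter> ball 0 e"
    have O': "open O'" "0 \<in> O'" using Ob e by (auto simp: O'_def)
    have inS: "\<phi> (\<gamma> t) \<in> S" if "t \<in> O'" for t
    proof -
      have "\<gamma> t \<in> M \<inter> U" using that Ob inM by (auto simp: O'_def)
      then show ?thesis using img by blast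
    qed
    have dcomp: "((\<lambda>t. \<phi> (\<gamma> t)) has_derivative (\<lambda>t. frechet_derivative \<phi> (at x) (t *\<^sub>R v))) (at 0)"
      using diff_chain_at[OF dg' D\<phi>[folded g0]] g0 by (simp add: o_def)
    have "frechet_derivative \<phi> (at x) v \<in> S"
    proof (rule subspace_orth_mem[OF S])
      fix z assume z: "\<forall>s\<in>S. z \<bullet> s = 0"
      have d1: "((\<lambda>t. z \<bullet> \<phi> (\<gamma> t)) has_derivative (\<lambda>t. z \<bullet> frechet_derivative \<phi> (at x) (t *\<^sub>R v))) (at 0)"
        using has_derivative_inner[OF has_derivative_const dcomp, of z] by simp
      have d0: "((\<lambda>t. z \<bullet> \<phi> (\<gamma> t)) has_derivative (\<lambda>t. 0)) (at 0)"
        by (rule has_derivative_transform_within_open[OF has_derivative_const O']) (use z inS in auto)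
      have "(\<lambda>t. z \<bullet> frechet_derivative \<phi> (at x) (t *\<^sub>R v)) = (\<lambda>t::real. 0)"
        using has_derivative_unique[OF d1 d0] .
      then have "z \<bullet> frechet_derivative \<phi> (at x) (1 *\<^sub>R v) = 0" by metis
      then show "z \<bullet> frechet_derivative \<phi> (at x) v = 0" by simp
    qed
    then show "v \<in> frechet_derivative \<psi> (at (\<phi> x)) ` S" using id[of v] by (metis image_eqI)
  qed
  show "frechet_derivative \<psi> (at (\<phi> x)) ` S \<subseteq> tangent_space M x"
  proof
    fix t0 assume "t0 \<in> frechet_derivative \<psi> (at (\<phi> x)) ` S"
    then obtain s where s: "s \<in> S" and t0: "t0 = frechet_derivative \<psi> (at (\<phi> x)) s" by blast
    obtain \<epsilon> where \<epsilon>: "\<epsilon> > 0" "ball (\<phi> x) \<epsilon> \<subseteq> V" using V \<phi>xV openE by blast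
    define e where "e = \<epsilon> / (norm s + 1)"
    have e: "e > 0" using \<epsilon> unfolding e_def by (intro divide_pos_pos) (auto intro: add_nonneg_pos)
    define \<gamma> where "\<gamma> = (\<lambda>t::real. \<psi> (\<phi> x + t *\<^sub>R s))"
    have inM: "\<gamma> t \<in> M" if "t \<in> ball 0 e" for t
    proof -
      have "norm (t *\<^sub>R s) = \<bar>t\<bar> * norm s" by simp
      also have "\<dots> \<le> e * norm s" using that by (auto intro!: mult_right_mono simp: dist_real_def)
      also have "\<dots> = \<epsilon> * (norm s / (norm s + 1))" unfolding e_def by simp
      also have "\<dots> < \<epsilon> * 1"
      proof (rule mult_strict_left_mono[OF _ \<epsilon>(1)])
        have "norm s < norm s + 1" by simp
        then show "norm s / (norm s + 1) < 1" by (subst divide_less_eq_1) (auto intro: add_nonneg_pos)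
      qed
      finally have "\<phi> x + t *\<^sub>R s \<in> V" using \<epsilon> by (auto simp: dist_norm)
      moreover have "\<phi> x + t *\<^sub>R s \<in> S" using S s \<phi>xS by (simp add: subspace_add subspace_scale)
      ultimately have "\<phi> x + t *\<^sub>R s \<in> \<phi> ` (M \<inter> U)" using img by blast
      then obtain m where m0: "m \<in> M \<inter> U" "\<phi> x + t *\<^sub>R s = \<phi> m" by (rule imageE)
      then have m: "m \<in> M" "m \<in> U" "\<phi> m = \<phi> x + t *\<^sub>R s" by auto
      then have "\<gamma> t = m" using inv1 unfolding \<gamma>_def by metis
      then show ?thesis using m by simp
    qed
    have g0: "\<gamma> 0 = x" using inv1 x unfolding \<gamma>_def by simp
    have dl: "((\<lambda>t::real. \<phi> x + t *\<^sub>R s) has_derivative (\<lambda>t. t *\<^sub>R s)) (at 0)"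
      by (auto intro!: derivative_eq_intros)
    have D\<psi>': "(\<psi> has_derivative frechet_derivative \<psi> (at (\<phi> x))) (at (\<phi> x + 0 *\<^sub>R s))"
      using D\<psi> by simp
    have "(\<gamma> has_derivative (\<lambda>t. frechet_derivative \<psi> (at (\<phi> x)) (t *\<^sub>R s))) (at 0)"
      using diff_chain_at[OF dl D\<psi>'] unfolding \<gamma>_def by (simp add: o_def)
    moreover have "(\<lambda>t. frechet_derivative \<psi> (at (\<phi> x)) (t *\<^sub>R s)) = (\<lambda>t. t *\<^sub>R t0)"
      using linear_fd[OF \<psi>d V \<phi>xV] t0 by (simp add: linear_scale)
    ultimately have "(\<gamma> has_vector_derivative t0) (at 0)" by (simp add: has_vector_derivative_def)
    then show "t0 \<in> tangent_space M x"
      unfolding tangent_space_def using e inM g0 by blast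
  qed
qed



lemma chart_geometry:
  fixes M :: "(real^'n) set"
  assumes Msm: "smooth_embedded_submanifold M" and p: "p \<in> M"
  shows "\<exists>\<rho>>0. \<exists>C1 C2. closed (M \<inter> cball p \<rho>) \<and>
     (\<forall>x\<in>M \<inter> cball p \<rho>. subspace (tangent_space M x)) \<and>
     (\<forall>x\<in>M \<inter> cball p \<rho>. \<forall>y\<in>M \<inter> cball p \<rho>.
        norm ((y - x) - tangent_proj M x *v (y - x)) \<le> C1 * (norm (y - x))\<^sup>2) \<and>
     (\<forall>x\<in>M \<inter> cball p \<rho>. \<forall>z\<in>M \<inter> cball p \<rho>. \<forall>w. (\<forall>m\<in>M. norm (w - z) \<le> norm (w - m)) \<longrightarrow>
        norm (tangent_proj M x *v (w - z)) \<le> C2 * norm (x - z) * norm (w - z))"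
proof -
  obtain U V S and \<phi> \<psi> :: "real^'n \<Rightarrow> real^'n" where
    U: "open U" "p \<in> U" and V: "open V" and S: "subspace S" and
    \<phi>s: "smooth_on U \<phi>" and \<psi>s: "smooth_on V \<psi>" and \<phi>U: "\<phi> ` U = V" and
    inv1: "\<forall>x\<in>U. \<psi> (\<phi> x) = x" and inv2: "\<forall>y\<in>V. \<phi> (\<psi> y) = y" and
    img: "\<phi> ` (M \<inter> U) = V \<inter> S"
    using Msm p unfolding smooth_embedded_submanifold_def by metis
  note \<phi>d = smooth_C2(1)[OF \<phi>s] and \<psi>d = smooth_C2(1)[OF \<psi>s]
  define D\<phi> where "D\<phi> = (\<lambda>x. frechet_derivative \<phi> (at x))"
  define D\<psi> where "D\<psi> = (\<lambda>x. frechet_derivative \<psi> (at x))"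
  obtain r0 where r0: "r0 > 0" "cball p r0 \<subseteq> U"
  proof -
    obtain \<epsilon> where "\<epsilon> > 0" "ball p \<epsilon> \<subseteq> U" using U openE by blast
    moreover have "cball p (\<epsilon>/2) \<subseteq> ball p \<epsilon>" using \<open>\<epsilon> > 0\<close> by (simp add: cball_subset_ball_iff)
    ultimately show ?thesis using that[of "\<epsilon>/2"] by auto
  qed
  have \<phi>pV: "\<phi> p \<in> V" using \<phi>U U by blast
  obtain r1 where r1: "r1 > 0" "cball (\<phi> p) r1 \<subseteq> V"
  proof -
    obtain \<epsilon> where "\<epsilon> > 0" "ball (\<phi> p) \<epsilon> \<subseteq> V" using V \<phi>pV openE by blast
    moreover have "cball (\<phi> p) (\<epsilon>/2) \<subseteq> ball (\<phi> p) \<epsilon>" using \<open>\<epsilon> > 0\<close> by (simp add: cball_subset_ball_iff)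
    ultimately show ?thesis using that[of "\<epsilon>/2"] by auto
  qed
  define C' where "C' = cball (\<phi> p) r1"
  have C'V: "C' \<subseteq> V" and cC': "convex C'" using r1 by (auto simp: C'_def)
  obtain K\<phi> where K\<phi>0: "K\<phi> \<ge> 0" and K\<phi>: "\<And>x w. x \<in> cball p r0 \<Longrightarrow> norm (D\<phi> x w) \<le> K\<phi> * norm w"
  proof -
    have "\<exists>B\<ge>0. \<forall>x\<in>cball p r0. \<forall>w. norm (frechet_derivative \<phi> (at x) w) \<le> B * norm w"
      by (rule deriv_bounded[OF \<phi>d U(1) compact_cball r0(2)])
         (use smooth_C2(2)[OF \<phi>s] differentiable_imp_continuous_on in blast)
    then show ?thesis using that unfolding D\<phi>_def by blast
  qed
  have \<phi>lip: "norm (\<phi> x - \<phi> y) \<le> K\<phi> * norm (x - y)" if "x \<in> cball p r0" "y \<in> cball p r0" for x y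
    by (rule lipschitz_from_deriv[OF \<phi>d U(1) convex_cball r0(2)]) (use K\<phi> that in \<open>auto simp: D\<phi>_def\<close>)
  have "\<forall>i. \<exists>B. \<forall>a\<in>C'. \<forall>b\<in>C'. norm (D\<psi> a (axis i 1) - D\<psi> b (axis i 1)) \<le> B * norm (a - b)"
  proof
    fix i
    let ?g = "\<lambda>y. frechet_derivative \<psi> (at y) (axis i 1)"
    have gd: "?g differentiable_on V" using smooth_C2(2)[OF \<psi>s] .
    obtain B where B: "\<forall>x\<in>C'. \<forall>w. norm (frechet_derivative ?g (at x) w) \<le> B * norm w"
      using deriv_bounded[OF gd V _ C'V smooth_C2(3)[OF \<psi>s]] by (auto simp: C'_def)
    have "norm (?g a - ?g b) \<le> B * norm (a - b)" if "a \<in> C'" "b \<in> C'" for a b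
      by (rule lipschitz_from_deriv[OF gd V cC' C'V]) (use B that in auto)
    then show "\<exists>B. \<forall>a\<in>C'. \<forall>b\<in>C'. norm (D\<psi> a (axis i 1) - D\<psi> b (axis i 1)) \<le> B * norm (a - b)"
      unfolding D\<psi>_def by blast
  qed
  then obtain Bf where Bf0: "\<forall>i. \<forall>a\<in>C'. \<forall>b\<in>C'. norm (D\<psi> a (axis i 1) - D\<psi> b (axis i 1)) \<le> Bf i * norm (a - b)"
    by (rule choice[THEN exE])
  define Lp where "Lp = (\<Sum>i\<in>UNIV. max 0 (Bf i))"
  have Lp0: "Lp \<ge> 0" unfolding Lp_def by (simp add: sum_nonneg)
  have lin\<psi>: "linear (D\<psi> a)" if "a \<in> V" for a
    unfolding D\<psi>_def by (rule linear_fd[OF \<psi>d V that])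
  have lin\<phi>: "linear (D\<phi> a)" if "a \<in> U" for a
    unfolding D\<phi>_def by (rule linear_fd[OF \<phi>d U(1) that])
  have d\<psi>lip: "norm (D\<psi> a s - D\<psi> b s) \<le> Lp * norm (a - b) * norm s" if ab: "a \<in> C'" "b \<in> C'" for a b s
  proof -
    have lin: "linear (\<lambda>s. D\<psi> a s - D\<psi> b s)"
      using lin\<psi> ab C'V by (intro linear_compose_sub) auto
    have "norm (D\<psi> a s - D\<psi> b s) \<le> (\<Sum>i\<in>UNIV. norm (D\<psi> a (axis i 1) - D\<psi> b (axis i 1))) * norm s"
      using linear_basis_bound[OF lin] .
    also have "\<dots> \<le> (Lp * norm (a - b)) * norm s"
    proof (rule mult_right_mono)
      have "\<And>i. norm (D\<psi> a (axis i 1) - D\<psi> b (axis i 1)) \<le> max 0 (Bf i) * norm (a - b)"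
        using Bf0 ab by (meson max.cobounded2 mult_right_mono norm_ge_zero order_trans)
      then show "(\<Sum>i\<in>UNIV. norm (D\<psi> a (axis i 1) - D\<psi> b (axis i 1))) \<le> Lp * norm (a - b)"
        unfolding Lp_def sum_distrib_right by (rule sum_mono)
    qed simp
    finally show ?thesis by simp
  qed
  have taylor: "norm (\<psi> b - \<psi> a - D\<psi> a (b - a)) \<le> Lp * (norm (b - a))\<^sup>2" if ab: "a \<in> C'" "b \<in> C'" for a b
  proof -
    have seg: "closed_segment a b \<subseteq> C'" using ab cC' by (rule closed_segment_subset)
    have bl: "bounded_linear (D\<psi> a)" using lin\<psi> ab C'V linear_conv_bounded_linear by blast
    have "norm ((\<psi> b - D\<psi> a b) - (\<psi> a - D\<psi> a a)) \<le> (Lp * norm (b - a)) * norm (b - a)"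
    proof (rule differentiable_bound[OF convex_closed_segment, where f = "\<lambda>y. \<psi> y - D\<psi> a y" and f' = "\<lambda>y h. D\<psi> y h - D\<psi> a h"])
      fix y assume y: "y \<in> closed_segment a b"
      then have yV: "y \<in> V" using seg C'V by blast
      have "(\<psi> has_derivative D\<psi> y) (at y)" unfolding D\<psi>_def by (rule deriv_at_open[OF \<psi>d V yV])
      then have "((\<lambda>y. \<psi> y - D\<psi> a y) has_derivative (\<lambda>h. D\<psi> y h - D\<psi> a h)) (at y)"
        by (intro has_derivative_diff bounded_linear_imp_has_derivative[OF bl])
      then show "((\<lambda>y. \<psi> y - D\<psi> a y) has_derivative (\<lambda>h. D\<psi> y h - D\<psi> a h)) (at y within closed_segment a b)"
        by (simp add: has_derivative_at_withinI)
      have "dist y a \<le> dist a b" using dist_in_closed_segment[OF y] by blast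
      then have "norm (y - a) \<le> norm (b - a)" by (simp add: dist_norm norm_minus_commute)
      then show "onorm (\<lambda>h. D\<psi> y h - D\<psi> a h) \<le> Lp * norm (b - a)"
      proof (intro onorm_le)
        fix s
        have "norm (D\<psi> y s - D\<psi> a s) \<le> Lp * norm (y - a) * norm s"
          using d\<psi>lip[of y a s] y seg ab by auto
        also have "\<dots> \<le> Lp * norm (b - a) * norm s"
          using \<open>norm (y - a) \<le> norm (b - a)\<close> Lp0 by (intro mult_right_mono mult_left_mono) auto
        finally show "norm (D\<psi> y s - D\<psi> a s) \<le> Lp * norm (b - a) * norm s" .
      qed
    qed (auto)
    moreover have "(\<psi> b - D\<psi> a b) - (\<psi> a - D\<psi> a a) = \<psi> b - \<psi> a - D\<psi> a (b - a)"
      using linear_diff[OF lin\<psi>[of a]] ab C'V by auto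
    ultimately show ?thesis by (simp add: power2_eq_square mult.assoc)
  qed
  define \<rho> where "\<rho> = min r0 (r1 / (K\<phi> + 1))"
  have \<rho>0: "\<rho> > 0" unfolding \<rho>_def using r0 r1 K\<phi>0 by auto
  have \<rho>r0: "cball p \<rho> \<subseteq> cball p r0" unfolding \<rho>_def by auto
  have \<rho>U: "cball p \<rho> \<subseteq> U" using \<rho>r0 r0 by blast
  have \<phi>C': "\<phi> x \<in> C'" if "x \<in> cball p \<rho>" for x
  proof -
    have "norm (\<phi> x - \<phi> p) \<le> K\<phi> * norm (x - p)" using \<phi>lip \<rho>r0 that r0 by auto
    also have "\<dots> \<le> K\<phi> * (r1 / (K\<phi> + 1))"
      using that K\<phi>0 unfolding \<rho>_def by (intro mult_left_mono) (auto simp: dist_norm norm_minus_commute)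
    also have "\<dots> \<le> r1" using K\<phi>0 r1 by (simp add: field_simps)
    finally show ?thesis unfolding C'_def by (simp add: dist_norm norm_minus_commute)
  qed
  have tan: "tangent_space M x = D\<psi> (\<phi> x) ` S" if "x \<in> M" "x \<in> U" for x
    unfolding D\<psi>_def by (rule tangent_chart[OF U(1) V S \<phi>d \<psi>d \<phi>U inv1 img that])
  have \<phi>S: "\<phi> x \<in> S" if "x \<in> M" "x \<in> U" for x using img that by blast
  have \<phi>V: "\<phi> x \<in> V" if "x \<in> U" for x using \<phi>U that by blast
  have sub: "subspace (tangent_space M x)" if "x \<in> M" "x \<in> U" for x
    using tan[OF that] linear_subspace_image[OF lin\<psi>[OF \<phi>V[OF that(2)]] S] by simp
  have id2: "D\<phi> x (D\<psi> (\<phi> x) s) = s" if "x \<in> U" for x s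
  proof -
    have "D\<phi> (\<psi> (\<phi> x)) (D\<psi> (\<phi> x) s) = s"
      unfolding D\<phi>_def D\<psi>_def
      by (rule inv_deriv[OF V \<phi>V[OF that] _ deriv_at_open[OF \<psi>d V \<phi>V[OF that]] deriv_at_open[OF \<phi>d U(1)]])
         (use inv2 inv1 that in auto)
    then show ?thesis using inv1 that by simp
  qed
  show ?thesis
  proof (intro exI conjI ballI allI impI)
    show "\<rho> > 0" by (rule \<rho>0)
    have "M \<inter> cball p \<rho> = cball p \<rho> \<inter> \<phi> -` S"
    proof
      show "M \<inter> cball p \<rho> \<subseteq> cball p \<rho> \<inter> \<phi> -` S"
      proof
        fix x assume x: "x \<in> M \<inter> cball p \<rho>"
        then have "x \<in> U" using \<rho>U by blast
        then have "\<phi> x \<in> S" using \<phi>S x by blast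
        then show "x \<in> cball p \<rho> \<inter> \<phi> -` S" using x by blast
      qed
      show "cball p \<rho> \<inter> \<phi> -` S \<subseteq> M \<inter> cball p \<rho>"
      proof
        fix x assume x: "x \<in> cball p \<rho> \<inter> \<phi> -` S"
        then have xU: "x \<in> U" using \<rho>U by blast
        then have "\<phi> x \<in> V \<inter> S" using x \<phi>V by blast
        then have "\<phi> x \<in> \<phi> ` (M \<inter> U)" using img by simp
        then obtain m where m: "m \<in> M \<inter> U" "\<phi> x = \<phi> m" by (rule imageE)
        have "x = \<psi> (\<phi> x)" using inv1 xU by simp
        also have "\<dots> = m" using m inv1 by simp
        finally show "x \<in> M \<inter> cball p \<rho>" using m x by blast
      qed
    qed
    moreover have "closed (cball p \<rho> \<inter> \<phi> -` S)"
    proof (rule continuous_closed_preimage)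
      show "continuous_on (cball p \<rho>) \<phi>"
        using continuous_on_subset[OF differentiable_imp_continuous_on[OF \<phi>d] \<rho>U] .
      show "closed (cball p \<rho>)" by simp
      show "closed S" using closed_subspace[OF S] .
    qed
    ultimately show "closed (M \<inter> cball p \<rho>)" by simp
  next
    fix x assume "x \<in> M \<inter> cball p \<rho>"
    then show "subspace (tangent_space M x)" using sub[of x] \<rho>U by auto
  next
    fix x y assume x: "x \<in> M \<inter> cball p \<rho>" and y: "y \<in> M \<inter> cball p \<rho>"
    have xU: "x \<in> U" and yU: "y \<in> U" using x y \<rho>U by auto
    have T: "subspace (tangent_space M x)" using sub x xU by blast
    have tT: "D\<psi> (\<phi> x) (\<phi> y - \<phi> x) \<in> tangent_space M x"
      using tan[of x] x xU \<phi>S[of x] \<phi>S[of y] y yU S by (auto intro: subspace_diff)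
    have "norm ((y - x) - tangent_proj M x *v (y - x)) = norm ((y - x) - projT (tangent_space M x) (y - x))"
      using tangent_proj_eq[OF T] by simp
    also have "\<dots> \<le> norm ((y - x) - D\<psi> (\<phi> x) (\<phi> y - \<phi> x))" by (rule projT_best[OF T tT])
    also have "\<dots> = norm (\<psi> (\<phi> y) - \<psi> (\<phi> x) - D\<psi> (\<phi> x) (\<phi> y - \<phi> x))" using inv1 xU yU by simp
    also have "\<dots> \<le> Lp * (norm (\<phi> y - \<phi> x))\<^sup>2" using taylor \<phi>C' x y by auto
    also have "\<dots> \<le> Lp * (K\<phi> * norm (y - x))\<^sup>2"
    proof -
      have "x \<in> cball p r0" "y \<in> cball p r0" using x y \<rho>r0 by auto
      then have "norm (\<phi> y - \<phi> x) \<le> K\<phi> * norm (y - x)" using \<phi>lip by blast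
      then show ?thesis using Lp0 by (intro mult_left_mono power_mono) auto
    qed
    also have "\<dots> = (Lp * K\<phi>\<^sup>2) * (norm (y - x))\<^sup>2" by (simp add: power_mult_distrib)
    finally show "norm ((y - x) - tangent_proj M x *v (y - x)) \<le> (Lp * K\<phi>\<^sup>2) * (norm (y - x))\<^sup>2" .
  next
    fix x z w assume x: "x \<in> M \<inter> cball p \<rho>" and z: "z \<in> M \<inter> cball p \<rho>"
      and near: "\<forall>m\<in>M. norm (w - z) \<le> norm (w - m)"
    have xU: "x \<in> U" and zU: "z \<in> U" using x z \<rho>U by auto
    have Tx: "subspace (tangent_space M x)" using sub x xU by blast
    let ?u = "w - z"
    let ?t = "projT (tangent_space M x) ?u"
    have orth: "?u \<bullet> v = 0" if "v \<in> tangent_space M z" for v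
      by (rule nearest_orth[of z M w v]) (use z near that in auto)
    have "?t \<in> tangent_space M x" using projT_ex[OF Tx] by blast
    then obtain s where s: "s \<in> S" and ts: "?t = D\<psi> (\<phi> x) s" using tan[of x] x xU by auto
    have ns: "norm s \<le> K\<phi> * norm ?t"
    proof -
      have "s = D\<phi> x ?t" using id2[OF xU] ts by simp
      then show ?thesis using K\<phi>[of x ?t] x \<rho>r0 by auto
    qed
    have t'T: "D\<psi> (\<phi> z) s \<in> tangent_space M z" using tan[of z] z zU s by auto
    have "(norm ?t)\<^sup>2 = ?t \<bullet> ?u" using projT_sq[OF Tx] .
    also have "\<dots> = (?t - D\<psi> (\<phi> z) s) \<bullet> ?u" using orth[OF t'T] by (simp add: inner_diff_left inner_diff_right inner_commute)
    also have "\<dots> \<le> norm (?t - D\<psi> (\<phi> z) s) * norm ?u" by (rule norm_cauchy_schwarz)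
    also have "norm (?t - D\<psi> (\<phi> z) s) \<le> Lp * norm (\<phi> x - \<phi> z) * norm s"
      using ts d\<psi>lip \<phi>C' x z by auto
    also have "\<dots> \<le> Lp * (K\<phi> * norm (x - z)) * (K\<phi> * norm ?t)"
    proof -
      have "x \<in> cball p r0" "z \<in> cball p r0" using x z \<rho>r0 by auto
      then have "norm (\<phi> x - \<phi> z) \<le> K\<phi> * norm (x - z)" using \<phi>lip by blast
      then show ?thesis using Lp0 ns K\<phi>0 by (intro mult_mono mult_left_mono) auto
    qed
    finally have "(norm ?t)\<^sup>2 \<le> Lp * (K\<phi> * norm (x - z)) * (K\<phi> * norm ?t) * norm ?u"
      by (simp add: mult_right_mono)
    then have key: "norm ?t * norm ?t \<le> norm ?t * ((Lp * K\<phi>\<^sup>2) * norm (x - z) * norm ?u)"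
      by (simp add: power2_eq_square algebra_simps)
    have "norm ?t \<le> (Lp * K\<phi>\<^sup>2) * norm (x - z) * norm ?u"
    proof (cases "norm ?t = 0")
      case True then show ?thesis using Lp0 by simp
    next
      case False then show ?thesis using key by (simp add: mult_le_cancel_left)
    qed
    then show "norm (tangent_proj M x *v (w - z)) \<le> (Lp * K\<phi>\<^sup>2) * norm (x - z) * norm (w - z)"
      using tangent_proj_eq[OF Tx] by simp
  qed
qed



lemma inv_lower_bound:
  fixes A :: "real^'n^'n"
  assumes inv: "invertible A" and mn: "mnorm (matrix_inv A) \<le> 1 / \<mu>" and \<mu>: "\<mu> > 0"
  shows "\<mu> * norm u \<le> norm (A *v u)"
proof -
  have "matrix_inv A ** A = mat 1"
    using inv unfolding invertible_def matrix_inv_def by (metis (mono_tags, lifting) someI_ex)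
  then have "u = matrix_inv A *v (A *v u)" by (simp add: matrix_vector_mul_assoc)
  then have "norm u = norm (matrix_inv A *v (A *v u))" by simp
  also have "\<dots> \<le> mnorm (matrix_inv A) * norm (A *v u)"
    unfolding mnorm_def
    by (rule onorm) (simp add: linear_conv_bounded_linear)
  also have "\<dots> \<le> (1 / \<mu>) * norm (A *v u)" by (rule mult_right_mono[OF mn]) simp
  finally show ?thesis using \<mu> by (simp add: field_simps)
qed

lemma deriv_lip_bound:
  fixes F :: "real^'n \<Rightarrow> real^'m"
  assumes D: "(F has_derivative D) (at y)" and G: "open G" "y \<in> G"
    and lip: "\<And>a b. a \<in> G \<Longrightarrow> b \<in> G \<Longrightarrow> norm (F a - F b) \<le> L * norm (a - b)"
  shows "norm (D v) \<le> L * norm v"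
proof -
  define g where "g = (\<lambda>t::real. F (y + t *\<^sub>R v))"
  have "((\<lambda>t::real. t *\<^sub>R v) has_derivative (\<lambda>t. t *\<^sub>R v)) (at 0)"
    by (rule bounded_linear_imp_has_derivative) (rule bounded_linear_scaleR_left)
  then have dl: "((\<lambda>t::real. y + t *\<^sub>R v) has_derivative (\<lambda>t. t *\<^sub>R v)) (at 0)"
    using has_derivative_add[OF has_derivative_const] by fastforce
  have D': "(F has_derivative D) (at (y + 0 *\<^sub>R v))" using D by simp
  have lin: "linear D" using D has_derivative_linear by blast
  have "(g has_derivative (\<lambda>t. D (t *\<^sub>R v))) (at 0)"
    using diff_chain_at[OF dl D'] unfolding g_def by (simp add: o_def)
  moreover have "(\<lambda>t. D (t *\<^sub>R v)) = (\<lambda>t. t *\<^sub>R D v)" using lin by (simp add: linear_scale)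
  ultimately have dg: "(g has_derivative (\<lambda>t. t *\<^sub>R D v)) (at 0)" by simp
  then have lim0: "((\<lambda>h. norm ((g h - g 0) - h *\<^sub>R D v) / norm (h - 0)) \<longlongrightarrow> 0) (at 0)"
    unfolding has_derivative_iff_norm by simp
  have eq: "norm ((g h - g 0) - h *\<^sub>R D v) / norm (h - 0) = norm ((g h - g 0) /\<^sub>R h - D v)"
    if "h \<noteq> 0" for h :: real
  proof -
    have "(g h - g 0) /\<^sub>R h - D v = (1 / h) *\<^sub>R (g h - g 0 - h *\<^sub>R D v)"
      using that by (simp add: scaleR_diff_right divide_inverse_commute)
    then show ?thesis by (simp add: divide_inverse mult.commute)
  qed
  have "((\<lambda>h. norm ((g h - g 0) /\<^sub>R h - D v)) \<longlongrightarrow> 0) (at (0::real))"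
  proof (rule Lim_transform_within[OF lim0 zero_less_one])
    fix h :: real assume "0 < dist h 0" "dist h 0 < 1"
    then show "norm ((g h - g 0) - h *\<^sub>R D v) / norm (h - 0) = norm ((g h - g 0) /\<^sub>R h - D v)"
      using eq by simp
  qed
  then have q: "((\<lambda>h. (g h - g 0) /\<^sub>R h) \<longlongrightarrow> D v) (at (0::real))"
    by (rule LIM_zero_cancel[OF tendsto_norm_zero_cancel])
  obtain e where e: "e > 0" "ball y e \<subseteq> G" using G openE by blast
  have ev: "eventually (\<lambda>h. norm ((g h - g 0) /\<^sub>R h) \<le> L * norm v) (at (0::real))"
  proof -
    have "eventually (\<lambda>h::real. h \<in> ball 0 (e / (norm v + 1))) (at 0)"
      by (rule eventually_at_in_open') (use e in \<open>auto simp: add_nonneg_pos\<close>)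
    moreover have "eventually (\<lambda>h::real. h \<noteq> 0) (at 0)" by (rule eventually_neq_at_within)
    ultimately have "eventually (\<lambda>h::real. h \<in> ball 0 (e / (norm v + 1)) \<and> h \<noteq> 0) (at 0)"
      by (rule eventually_conj)
    then show ?thesis
    proof (rule eventually_mono)
      fix h :: real assume h0: "h \<in> ball 0 (e / (norm v + 1)) \<and> h \<noteq> 0"
      then have h: "h \<in> ball 0 (e / (norm v + 1))" and hn: "h \<noteq> 0" by auto
      have "norm (h *\<^sub>R v) = \<bar>h\<bar> * norm v" by simp
      also have "\<dots> \<le> (e / (norm v + 1)) * norm v" using h by (intro mult_right_mono) (auto simp: dist_real_def)
      also have "\<dots> < e"
      proof -
        have "e / (norm v + 1) * norm v = e * (norm v / (norm v + 1))" by simp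
        also have "\<dots> < e * 1"
        proof (rule mult_strict_left_mono[OF _ e(1)])
          have "norm v < norm v + 1" by simp
          then show "norm v / (norm v + 1) < 1" by (subst divide_less_eq_1) (auto intro: add_nonneg_pos)
        qed
        finally show ?thesis by simp
      qed
      finally have "y + h *\<^sub>R v \<in> G" using e by (auto simp: dist_norm)
      then have "norm (g h - g 0) \<le> L * norm (h *\<^sub>R v)" using lip[of "y + h *\<^sub>R v" y] G unfolding g_def by simp
      then show "norm ((g h - g 0) /\<^sub>R h) \<le> L * norm v"
      proof -
        have "norm ((g h - g 0) /\<^sub>R h) = norm (g h - g 0) / \<bar>h\<bar>" by (simp add: divide_inverse mult.commute)
        also have "\<dots> \<le> L * (\<bar>h\<bar> * norm v) / \<bar>h\<bar>"
          using \<open>norm (g h - g 0) \<le> L * norm (h *\<^sub>R v)\<close> by (intro divide_right_mono) auto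
        also have "\<dots> = L * norm v" using hn by simp
        finally show ?thesis .
      qed
    qed
  qed
  show ?thesis by (rule Lim_norm_ubound[OF _ q ev]) simp
qed

lemma tendsto_mat_vec:
  fixes A :: "nat \<Rightarrow> real^'n^'m"
  assumes "A \<longlonglongrightarrow> J"
  shows "(\<lambda>k. A k *v v) \<longlonglongrightarrow> J *v v"
proof (rule vec_tendstoI)
  fix i
  have "\<And>j. (\<lambda>k. A k $ i $ j) \<longlonglongrightarrow> J $ i $ j"
    using assms by (intro tendsto_vec_nth)
  then have "(\<lambda>k. \<Sum>j\<in>UNIV. A k $ i $ j * v $ j) \<longlonglongrightarrow> (\<Sum>j\<in>UNIV. J $ i $ j * v $ j)"
    using tendsto_sum[of UNIV "\<lambda>j k. A k $ i $ j * v $ j" "\<lambda>j. J $ i $ j * v $ j" sequentially]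
      tendsto_mult_right[OF \<open>\<And>j. (\<lambda>k. A k $ i $ j) \<longlonglongrightarrow> J $ i $ j\<close>] by blast
  then show "(\<lambda>k. (A k *v v) $ i) \<longlonglongrightarrow> (J *v v) $ i"
    by (simp add: matrix_vector_mult_def)
qed

lemma bjac_bound:
  fixes F :: "real^'n \<Rightarrow> real^'n"
  assumes J: "J \<in> B_jac F x" and G: "open G" "x \<in> G"
    and lip: "\<And>a b. a \<in> G \<Longrightarrow> b \<in> G \<Longrightarrow> norm (F a - F b) \<le> L * norm (a - b)"
  shows "norm (J *v v) \<le> L * norm v"
proof -
  obtain xs where xs: "xs \<longlonglongrightarrow> x" and dif: "\<And>k. F differentiable (at (xs k))"
    and lim: "(\<lambda>k. matrix (frechet_derivative F (at (xs k)))) \<longlonglongrightarrow> J"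
    using J unfolding B_jac_def by blast
  have t: "(\<lambda>k. matrix (frechet_derivative F (at (xs k))) *v v) \<longlonglongrightarrow> J *v v"
    by (rule tendsto_mat_vec[OF lim])
  have "eventually (\<lambda>k. xs k \<in> G) sequentially" using xs G by (rule topological_tendstoD)
  then have ev: "eventually (\<lambda>k. norm (matrix (frechet_derivative F (at (xs k))) *v v) \<le> L * norm v) sequentially"
  proof (rule eventually_mono)
    fix k assume k: "xs k \<in> G"
    have D: "(F has_derivative frechet_derivative F (at (xs k))) (at (xs k))"
      using dif frechet_derivative_works by blast
    have "matrix (frechet_derivative F (at (xs k))) *v v = frechet_derivative F (at (xs k)) v"
      using matrix_vector_mul(2)[OF has_derivative_linear[OF D]] by metis
    then show "norm (matrix (frechet_derivative F (at (xs k))) *v v) \<le> L * norm v"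
      using deriv_lip_bound[OF D G(1) k lip] by simp
  qed
  show ?thesis by (rule Lim_norm_ubound[OF _ t ev]) simp
qed



lemma infdist_lessE:
  assumes "A \<noteq> {}" "infdist x A < e"
  obtains a where "a \<in> A" "dist x a < e"
proof -
  have "(INF a\<in>A. dist x a) < e" using assms by (simp add: infdist_notempty)
  moreover have "bdd_below ((\<lambda>a. dist x a) ` A)" by (rule bdd_belowI[of _ 0]) auto
  ultimately show ?thesis using cINF_less_iff[OF assms(1)] that by blast
qed

lemma Amat_eq:
  fixes J P :: "real^'n^'n"
  shows "(J ** P + c *\<^sub>R mat 1) *v u = J *v (P *v u) + c *\<^sub>R u"
  by (simp add: matrix_vector_mult_add_rdistrib matrix_vector_mul_assoc scaleR_matrix_vector_assoc[symmetric])

lemma norm_sq_le: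
  fixes a b :: real
  assumes "0 \<le> a" "a \<le> b"
  shows "a\<^sup>2 \<le> b\<^sup>2"
  using assms by (simp add: power_mono)



lemma tri3:
  fixes a b c :: "'a::real_normed_vector"
  shows "norm (a - c) \<le> norm (a - b) + norm (b - c)"
  using norm_triangle_ineq[of "a - b" "b - c"] by simp

lemma tri4:
  fixes a b c d :: "'a::real_normed_vector"
  shows "norm (- a + b + c - d) \<le> norm a + norm b + norm c + norm d"
proof -
  have "norm (- a + b + c - d) \<le> norm (- a + b + c) + norm d" by (rule norm_triangle_ineq4)
  also have "norm (- a + b + c) \<le> norm (- a + b) + norm c" by (rule norm_triangle_ineq)
  also have "norm (- a + b) \<le> norm (- a) + norm b" by (rule norm_triangle_ineq)
  finally show ?thesis by simp
qed

lemma tri5: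
  fixes a b c d e :: "'a::real_normed_vector"
  shows "norm (a + b - c - d + e) \<le> norm a + norm b + norm c + norm d + norm e"
proof -
  have "norm (a + b - c - d + e) \<le> norm (a + b - c - d) + norm e" by (rule norm_triangle_ineq)
  also have "norm (a + b - c - d) \<le> norm (a + b - c) + norm d" by (rule norm_triangle_ineq4)
  also have "norm (a + b - c) \<le> norm (a + b) + norm c" by (rule norm_triangle_ineq4)
  also have "norm (a + b) \<le> norm a + norm b" by (rule norm_triangle_ineq)
  finally show ?thesis by simp
qed

lemma step_core:
  fixes F :: "real^'n \<Rightarrow> real^'n" and M :: "(real^'n) set" and p x z d r :: "real^'n"
    and J :: "real^'n^'n"
  assumes Zdef: "Z = {z. F z = 0} \<inter> M"
    and pZ: "p \<in> Z" and \<rho>: "\<rho> > 0"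
    and L1: "L1 \<ge> 0" and L2: "L2 > 0" and C1: "C1 \<ge> 0" and C2: "C2 \<ge> 0" and \<gamma>: "\<gamma> > 0"
    and L3: "L3 > 0" and q: "q \<ge> 1"
    and H1: "\<forall>x\<in>M \<inter> cball p \<rho>. \<forall>y\<in>M \<inter> cball p \<rho>. \<forall>J\<in>B_jac F x.
        norm (F y - F x - J *v (y - x)) \<le> L1 * (norm (y - x))\<^sup>2"
    and H2: "\<forall>x\<in>M \<inter> cball p \<rho>. \<forall>J\<in>B_jac F x. \<forall>v. norm (J *v v) \<le> L2 * norm v"
    and H2': "\<forall>x\<in>cball p \<rho>. \<forall>y\<in>cball p \<rho>. norm (F x - F y) \<le> L2 * norm (x - y)"
    and H3: "\<forall>x\<in>M \<inter> cball p \<rho>. \<forall>J\<in>B_jac F x. F x \<noteq> 0 \<longrightarrow>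
        (\<forall>u. norm (F x) * norm u \<le> norm ((J ** tangent_proj M x + norm (F x) *\<^sub>R mat 1) *v u))"
    and H4: "\<forall>x\<in>M \<inter> cball p \<rho>. \<gamma> * infdist x Z \<le> norm (F x)"
    and G1: "\<forall>x\<in>M \<inter> cball p \<rho>. \<forall>y\<in>M \<inter> cball p \<rho>.
        norm ((y - x) - tangent_proj M x *v (y - x)) \<le> C1 * (norm (y - x))\<^sup>2"
    and G2: "\<forall>x\<in>M \<inter> cball p \<rho>. \<forall>z\<in>M \<inter> cball p \<rho>. \<forall>w. (\<forall>m\<in>M. norm (w - z) \<le> norm (w - m)) \<longrightarrow>
        norm (tangent_proj M x *v (w - z)) \<le> C2 * norm (x - z) * norm (w - z)"
    and Cd0def: "Cd0 = 2 * (L1 + L2 * C1 + L3 * L2\<^sup>2) / \<gamma> + 2"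
    and K2def: "K2 = 4 * L1 * Cd0\<^sup>2 + L3 * L2\<^sup>2 + L2 * Cd0 + 2 * L2 * C2 * Cd0\<^sup>2 + 4 * L2 * C1 * Cd0\<^sup>2"
    and \<rho>1def: "\<rho>1 = min (\<rho> / (3 + 4 * Cd0)) (1 / L2)"
    and xM: "x \<in> M" and xp: "norm (x - p) \<le> \<rho>1"
    and Fx: "F x \<noteq> 0" and J: "J \<in> B_jac F x"
    and eq: "(J ** tangent_proj M x + norm (F x) *\<^sub>R mat 1) *v d = - F x + r"
    and rb: "norm r / norm (F x) \<le> L3 * norm (F x) powr q"
    and zM: "z \<in> M" and zproj: "dist (x + d) z = infdist (x + d) M"
  shows "infdist z Z \<le> (4 * K2 / \<gamma>) * (infdist x Z)\<^sup>2 \<and> norm (z - x) \<le> 4 * Cd0 * infdist x Z"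
proof -
  define \<mu> where "\<mu> = norm (F x)"
  define \<delta> where "\<delta> = infdist x Z"
  define P where "P = tangent_proj M x"
  define K1 where "K1 = L1 + L2 * C1 + L3 * L2\<^sup>2"
  have K1: "K1 \<ge> 0" unfolding K1_def using L1 L2 C1 L3 by simp
  have Cd0: "Cd0 \<ge> 2" unfolding Cd0def using K1 \<gamma> unfolding K1_def by simp
  have \<mu>0: "\<mu> > 0" using Fx unfolding \<mu>_def by simp
  have \<rho>1: "\<rho>1 > 0" "\<rho>1 \<le> \<rho> / (3 + 4 * Cd0)" "\<rho>1 \<le> 1 / L2" unfolding \<rho>1def using \<rho> Cd0 L2 by auto
  have \<rho>1\<rho>: "(3 + 4 * Cd0) * \<rho>1 \<le> \<rho>" using \<rho>1(2) Cd0 by (simp add: field_simps)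
  have R1: "3 * \<rho>1 + 4 * (Cd0 * \<rho>1) \<le> \<rho>" using \<rho>1\<rho> by (simp add: algebra_simps)
  have R2: "Cd0 * \<rho>1 \<ge> 0" using Cd0 \<rho>1 by simp
  have Zne: "Z \<noteq> {}" using pZ by blast
  have Fp: "F p = 0" using pZ Zdef by simp
  have \<delta>0: "\<delta> \<ge> 0" unfolding \<delta>_def by (rule infdist_nonneg)
  have \<delta>xp: "\<delta> \<le> norm (x - p)" unfolding \<delta>_def using infdist_le[OF pZ, of x] by (simp add: dist_norm)
  have xball: "x \<in> cball p \<rho>"
  proof -
    have "norm (x - p) \<le> \<rho>" using xp R1 R2 \<rho>1 by linarith
    then show ?thesis by (simp add: dist_norm norm_minus_commute)
  qed
  have xB: "x \<in> M \<inter> cball p \<rho>" using xM xball by simp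
  have pball: "p \<in> cball p \<rho>" using \<rho> by simp
  have \<mu>le1: "\<mu> \<le> 1"
  proof -
    have "\<mu> = norm (F x - F p)" using Fp unfolding \<mu>_def by simp
    also have "\<dots> \<le> L2 * norm (x - p)" using H2' xball pball by blast
    also have "\<dots> \<le> L2 * (1 / L2)" using xp \<rho>1(3) L2 by (intro mult_left_mono) auto
    finally show ?thesis using L2 by simp
  qed
  have \<gamma>\<delta>: "\<gamma> * \<delta> \<le> \<mu>" using H4 xB unfolding \<delta>_def \<mu>_def by blast
  have \<delta>pos: "\<delta> > 0"
  proof (rule ccontr)
    assume "\<not> \<delta> > 0"
    then have "\<delta> = 0" using \<delta>0 by simp
    define \<epsilon> where "\<epsilon> = min (\<mu> / L2) (\<rho> - \<rho>1)"
    have \<rho>1lt: "\<rho>1 < \<rho>" using R1 R2 \<rho>1 by linarith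
    have \<epsilon>: "\<epsilon> > 0" unfolding \<epsilon>_def using \<mu>0 L2 \<rho>1lt by simp
    obtain a where a: "a \<in> Z" "dist x a < \<epsilon>" using infdist_lessE[OF Zne, of x \<epsilon>] \<open>\<delta> = 0\<close> \<epsilon> unfolding \<delta>_def by auto
    have "norm (a - p) \<le> norm (a - x) + norm (x - p)" by (rule tri3)
    also have "\<dots> < \<rho>" using a(2) xp unfolding \<epsilon>_def by (simp add: dist_norm norm_minus_commute)
    finally have "a \<in> cball p \<rho>" by (simp add: dist_norm norm_minus_commute)
    then have "norm (F x - F a) \<le> L2 * norm (x - a)" using H2' xball by blast
    also have "\<dots> < L2 * (\<mu> / L2)" using a(2) L2 unfolding \<epsilon>_def by (intro mult_strict_left_mono) (auto simp: dist_norm)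
    finally show False using a(1) Zdef L2 unfolding \<mu>_def by simp
  qed
  obtain xb where xbZ: "xb \<in> Z" and xbd: "dist x xb < 2 * \<delta>"
    using infdist_lessE[OF Zne, of x "2 * \<delta>"] \<delta>pos unfolding \<delta>_def by auto
  define e where "e = xb - x"
  define ne where "ne = norm e"
  have ne2: "ne \<le> 2 * \<delta>" using xbd unfolding ne_def e_def by (simp add: dist_norm norm_minus_commute)
  have \<delta>ne: "\<delta> \<le> ne" unfolding \<delta>_def ne_def e_def using infdist_le[OF xbZ, of x] by (simp add: dist_norm norm_minus_commute)
  have ne0: "ne \<ge> 0" unfolding ne_def by simp
  have Fxb: "F xb = 0" and xbM: "xb \<in> M" using xbZ Zdef by auto
  have xbball: "xb \<in> cball p \<rho>"
  proof -
    have "norm (xb - p) \<le> norm (xb - x) + norm (x - p)" by (rule tri3)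
    also have "\<dots> \<le> 2 * \<rho>1 + \<rho>1" using ne2 \<delta>xp xp unfolding ne_def e_def by (simp add: norm_minus_commute)
    also have "\<dots> \<le> \<rho>" using R1 R2 \<rho>1 by linarith
    finally show ?thesis by (simp add: dist_norm norm_minus_commute)
  qed
  have xbB: "xb \<in> M \<inter> cball p \<rho>" using xbM xbball by simp
  have \<mu>ne: "\<mu> \<le> L2 * ne"
  proof -
    have "\<mu> = norm (F x - F xb)" using Fxb unfolding \<mu>_def by simp
    also have "\<dots> \<le> L2 * norm (x - xb)" using H2' xball xbball by blast
    finally show ?thesis unfolding ne_def e_def by (simp add: norm_minus_commute)
  qed
  have \<gamma>ne: "\<gamma> * ne \<le> 2 * \<mu>" using mult_left_mono[OF ne2, of \<gamma>] \<gamma>\<delta> \<gamma> by linarith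
  have rb2: "norm r \<le> L3 * \<mu>\<^sup>2"
  proof -
    have "norm r \<le> L3 * \<mu> powr q * \<mu>" using rb \<mu>0 unfolding \<mu>_def by (simp add: divide_le_eq)
    also have "\<mu> powr q \<le> \<mu> powr 1" using powr_mono'[OF q _ \<mu>le1] \<mu>0 by simp
    then have "L3 * \<mu> powr q * \<mu> \<le> L3 * \<mu> * \<mu>" using L3 \<mu>0 by (simp add: mult_right_mono)
    finally show ?thesis by (simp add: power2_eq_square mult.assoc)
  qed
  have rb3: "norm r \<le> L3 * L2\<^sup>2 * ne\<^sup>2"
  proof -
    have "\<mu>\<^sup>2 \<le> (L2 * ne)\<^sup>2" using \<mu>ne \<mu>0 by (intro power_mono) auto
    then have "L3 * \<mu>\<^sup>2 \<le> L3 * (L2 * ne)\<^sup>2" using L3 by (intro mult_left_mono) auto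
    then show ?thesis using rb2 by (simp add: power_mult_distrib mult.assoc)
  qed
  have J2: "\<And>v. norm (J *v v) \<le> L2 * norm v" using H2 xB J by blast
  define A where "A = J ** P + \<mu> *\<^sub>R mat 1"
  have Aeq: "\<And>u. A *v u = J *v (P *v u) + \<mu> *\<^sub>R u" unfolding A_def by (rule Amat_eq)
  have Alow: "\<And>u. \<mu> * norm u \<le> norm (A *v u)" using H3 xB J Fx unfolding A_def P_def \<mu>_def by blast
  have eqA: "A *v d = - F x + r" using eq unfolding A_def P_def \<mu>_def .
  have E1: "norm (F x + J *v e) \<le> L1 * ne\<^sup>2"
  proof -
    have "norm (F xb - F x - J *v (xb - x)) \<le> L1 * (norm (xb - x))\<^sup>2" using H1 xB xbB J by blast
    moreover have "F xb - F x - J *v (xb - x) = - (F x + J *v (xb - x))" using Fxb by simp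
    ultimately show ?thesis unfolding ne_def e_def by (metis norm_minus_cancel)
  qed
  have E2: "norm (J *v (e - P *v e)) \<le> L2 * C1 * ne\<^sup>2"
  proof -
    have "norm (e - P *v e) \<le> C1 * ne\<^sup>2" using G1 xB xbB unfolding P_def ne_def e_def by blast
    then have "L2 * norm (e - P *v e) \<le> L2 * (C1 * ne\<^sup>2)" using L2 by (intro mult_left_mono) auto
    then show ?thesis using J2[of "e - P *v e"] by (simp add: mult.assoc)
  qed
  have Ade: "A *v (d - e) = - (F x + J *v e) + J *v (e - P *v e) + r - \<mu> *\<^sub>R e"
    using eqA Aeq[of e] Aeq[of "d - e"]
    by (simp add: matrix_vector_mult_diff_distrib matrix_vector_right_distrib algebra_simps)
  have "\<mu> * norm (d - e) \<le> norm (A *v (d - e))" by (rule Alow)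
  also have "\<dots> \<le> norm (F x + J *v e) + norm (J *v (e - P *v e)) + norm r + \<mu> * ne"
    using tri4[of "F x + J *v e" "J *v (e - P *v e)" r "\<mu> *\<^sub>R e"] \<mu>0 unfolding Ade ne_def by simp
  also have "\<dots> \<le> K1 * ne\<^sup>2 + \<mu> * ne"
    using E1 E2 rb3 unfolding K1_def by (simp add: algebra_simps)
  also have "K1 * ne\<^sup>2 \<le> \<mu> * (2 * K1 / \<gamma> * ne)"
  proof -
    have "K1 * ne\<^sup>2 = (K1 * ne / \<gamma>) * (\<gamma> * ne)" using \<gamma> by (simp add: power2_eq_square field_simps)
    also have "\<dots> \<le> (K1 * ne / \<gamma>) * (2 * \<mu>)" using \<gamma>ne K1 ne0 \<gamma> by (intro mult_left_mono) auto
    finally show ?thesis by (simp add: field_simps)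
  qed
  finally have "\<mu> * norm (d - e) \<le> \<mu> * ((2 * K1 / \<gamma> + 1) * ne)" by (simp add: algebra_simps)
  then have nde: "norm (d - e) \<le> (2 * K1 / \<gamma> + 1) * ne" using \<mu>0 by simp
  define nd where "nd = norm d"
  have nd: "nd \<le> Cd0 * ne"
  proof -
    have "nd \<le> norm (d - e) + norm e" unfolding nd_def using norm_triangle_ineq[of "d - e" e] by simp
    also have "\<dots> \<le> (2 * K1 / \<gamma> + 1) * ne + ne" using nde unfolding ne_def by simp
    finally show ?thesis unfolding Cd0def K1_def by (simp add: algebra_simps)
  qed
  have nd0: "nd \<ge> 0" unfolding nd_def by simp
  define w where "w = x + d"
  have near: "\<forall>m\<in>M. norm (w - z) \<le> norm (w - m)"
    using zproj infdist_le unfolding w_def by (metis dist_norm)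
  have nwz: "norm (w - z) \<le> nd" using near xM unfolding w_def nd_def by fastforce
  have nzx: "norm (z - x) \<le> 2 * nd"
  proof -
    have "norm (z - x) \<le> norm (z - w) + norm (w - x)" by (rule tri3)
    then show ?thesis using nwz unfolding w_def nd_def by (simp add: norm_minus_commute)
  qed
  have zball: "z \<in> cball p \<rho>"
  proof -
    have "norm (z - p) \<le> norm (z - x) + norm (x - p)" by (rule tri3)
    also have "\<dots> \<le> 2 * (Cd0 * (2 * \<rho>1)) + \<rho>1"
    proof -
      have "ne \<le> 2 * \<rho>1" using ne2 \<delta>xp xp by simp
      then have "Cd0 * ne \<le> Cd0 * (2 * \<rho>1)" using Cd0 by (intro mult_left_mono) auto
      then show ?thesis using nzx nd xp by simp
    qed
    also have "\<dots> = (1 + 4 * Cd0) * \<rho>1" by (simp add: algebra_simps)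
    also have "\<dots> \<le> \<rho>" using R1 R2 \<rho>1 by (simp add: algebra_simps)
    finally show ?thesis by (simp add: dist_norm norm_minus_commute)
  qed
  have zB: "z \<in> M \<inter> cball p \<rho>" using zM zball by simp
  have Fz: "F z = (F z - F x - J *v (z - x)) + r - \<mu> *\<^sub>R d - J *v (P *v (w - z))
      + J *v ((z - x) - P *v (z - x))"
  proof -
    have "J *v (P *v d) = - F x + r - \<mu> *\<^sub>R d" using eqA Aeq[of d] by (simp add: algebra_simps)
    moreover have "z - x = d - (w - z)" unfolding w_def by simp
    ultimately show ?thesis
      by (simp add: matrix_vector_mult_diff_distrib matrix_vector_right_distrib algebra_simps)
  qed
  have T1: "norm (F z - F x - J *v (z - x)) \<le> 4 * L1 * nd\<^sup>2"
  proof -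
    have "norm (F z - F x - J *v (z - x)) \<le> L1 * (norm (z - x))\<^sup>2" using H1 xB zB J by blast
    also have "\<dots> \<le> L1 * (2 * nd)\<^sup>2" using nzx L1 by (intro mult_left_mono power_mono) auto
    finally show ?thesis by (simp add: power_mult_distrib)
  qed
  have T2: "norm (\<mu> *\<^sub>R d) \<le> L2 * ne * nd" using \<mu>ne \<mu>0 nd0 unfolding nd_def by (simp add: mult_right_mono)
  have T3: "norm (J *v (P *v (w - z))) \<le> 2 * L2 * C2 * nd\<^sup>2"
  proof -
    have "norm (P *v (w - z)) \<le> C2 * norm (x - z) * norm (w - z)" using G2 xB zB near unfolding P_def by blast
    also have "\<dots> \<le> C2 * (2 * nd) * nd" using nzx nwz C2 nd0 by (intro mult_mono mult_left_mono) (auto simp: norm_minus_commute)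
    finally have "norm (P *v (w - z)) \<le> C2 * (2 * nd) * nd" .
    then have "norm (J *v (P *v (w - z))) \<le> L2 * (C2 * (2 * nd) * nd)"
      using order_trans[OF J2[of "P *v (w - z)"] mult_left_mono[OF \<open>norm (P *v (w - z)) \<le> C2 * (2 * nd) * nd\<close> less_imp_le[OF L2]]] by blast
    then show ?thesis by (simp add: power2_eq_square algebra_simps)
  qed
  have T4: "norm (J *v ((z - x) - P *v (z - x))) \<le> 4 * L2 * C1 * nd\<^sup>2"
  proof -
    have "norm ((z - x) - P *v (z - x)) \<le> C1 * (norm (z - x))\<^sup>2" using G1 xB zB unfolding P_def by blast
    also have "\<dots> \<le> C1 * (2 * nd)\<^sup>2" using nzx C1 by (intro mult_left_mono power_mono) auto
    finally have "norm ((z - x) - P *v (z - x)) \<le> C1 * (2 * nd)\<^sup>2" .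
    then have "norm (J *v ((z - x) - P *v (z - x))) \<le> L2 * (C1 * (2 * nd)\<^sup>2)"
      using order_trans[OF J2[of "(z - x) - P *v (z - x)"] mult_left_mono[OF \<open>norm ((z - x) - P *v (z - x)) \<le> C1 * (2 * nd)\<^sup>2\<close> less_imp_le[OF L2]]] by blast
    then show ?thesis by (simp add: power2_eq_square algebra_simps)
  qed
  have "norm (F z) \<le> 4 * L1 * nd\<^sup>2 + L3 * L2\<^sup>2 * ne\<^sup>2 + L2 * ne * nd + 2 * L2 * C2 * nd\<^sup>2 + 4 * L2 * C1 * nd\<^sup>2"
  proof -
    have "norm (F z) \<le> norm (F z - F x - J *v (z - x)) + norm r + norm (\<mu> *\<^sub>R d) + norm (J *v (P *v (w - z)))
      + norm (J *v ((z - x) - P *v (z - x)))"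
    proof -
      have nFz: "norm (F z) = norm ((F z - F x - J *v (z - x)) + r - \<mu> *\<^sub>R d - J *v (P *v (w - z))
        + J *v ((z - x) - P *v (z - x)))" using Fz by (rule arg_cong)
      show ?thesis using nFz tri5[of "F z - F x - J *v (z - x)" r "\<mu> *\<^sub>R d" "J *v (P *v (w - z))"
        "J *v ((z - x) - P *v (z - x))"] by linarith
    qed
    then show ?thesis using T1 T2 T3 T4 rb3 by linarith
  qed
  also have "\<dots> \<le> K2 * ne\<^sup>2"
  proof -
    have nd2: "nd\<^sup>2 \<le> Cd0\<^sup>2 * ne\<^sup>2" using nd nd0 by (metis power_mono power_mult_distrib)
    have a1: "4 * L1 * nd\<^sup>2 \<le> 4 * L1 * (Cd0\<^sup>2 * ne\<^sup>2)" using nd2 L1 by (intro mult_left_mono) auto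
    have a2: "L2 * ne * nd \<le> L2 * ne * (Cd0 * ne)" using nd L2 ne0 by (intro mult_left_mono) auto
    have a3: "2 * L2 * C2 * nd\<^sup>2 \<le> 2 * L2 * C2 * (Cd0\<^sup>2 * ne\<^sup>2)" using nd2 L2 C2 by (intro mult_left_mono) auto
    have a4: "4 * L2 * C1 * nd\<^sup>2 \<le> 4 * L2 * C1 * (Cd0\<^sup>2 * ne\<^sup>2)" using nd2 L2 C1 by (intro mult_left_mono) auto
    have "K2 * ne\<^sup>2 = 4 * L1 * (Cd0\<^sup>2 * ne\<^sup>2) + L3 * L2\<^sup>2 * ne\<^sup>2 + L2 * ne * (Cd0 * ne)
       + 2 * L2 * C2 * (Cd0\<^sup>2 * ne\<^sup>2) + 4 * L2 * C1 * (Cd0\<^sup>2 * ne\<^sup>2)"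
      unfolding K2def by (simp add: power2_eq_square algebra_simps)
    then show ?thesis using a1 a2 a3 a4 by linarith
  qed
  finally have Fzb: "norm (F z) \<le> K2 * ne\<^sup>2" .
  have K2: "K2 \<ge> 0" unfolding K2def using L1 L2 L3 C1 C2 Cd0 by simp
  have "\<gamma> * infdist z Z \<le> norm (F z)" using H4 zB by blast
  also have "\<dots> \<le> K2 * ne\<^sup>2" by (rule Fzb)
  also have "\<dots> \<le> K2 * (2 * \<delta>)\<^sup>2" using ne2 ne0 K2 by (intro mult_left_mono power_mono) auto
  finally have "\<gamma> * infdist z Z \<le> 4 * K2 * \<delta>\<^sup>2" by (simp add: power_mult_distrib)
  then have c1: "infdist z Z \<le> (4 * K2 / \<gamma>) * \<delta>\<^sup>2" using \<gamma> by (simp add: field_simps)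
  have c2: "norm (z - x) \<le> 4 * Cd0 * \<delta>"
  proof -
    have "norm (z - x) \<le> 2 * (Cd0 * ne)" using nzx nd by simp
    also have "\<dots> \<le> 2 * (Cd0 * (2 * \<delta>))" using ne2 Cd0 by (intro mult_left_mono) auto
    finally show ?thesis by simp
  qed
  show ?thesis using c1 c2 unfolding \<delta>_def by simp
qed



lemma half_pow_small:
  fixes a c :: real
  assumes "c > 0" "a \<ge> 0"
  shows "\<exists>N. \<forall>k\<ge>N. a * (1/2)^k < c"
proof -
  obtain N where N: "(1/2::real)^N < c / (a + 1)"
    using real_arch_pow_inv[of "c / (a + 1)" "1/2"] assms by (auto intro: divide_pos_pos)
  have "a * (1/2)^k < c" if "k \<ge> N" for k
  proof -
    have "(1/2::real)^k \<le> (1/2)^N" using that by (intro power_decreasing) auto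
    then have "a * (1/2)^k \<le> a * (1/2)^N" using assms by (intro mult_left_mono) auto
    also have "\<dots> \<le> (a + 1) * (1/2)^N" by (intro mult_right_mono) auto
    also have "\<dots> < (a + 1) * (c / (a + 1))" using N assms by (intro mult_strict_left_mono) auto
    also have "\<dots> = c" using assms by simp
    finally show ?thesis .
  qed
  then show ?thesis by blast
qed

lemma seq_conv:
  fixes x :: "nat \<Rightarrow> real^'n" and dd :: "real^'n \<Rightarrow> real"
  assumes step: "\<And>k. norm (x k - xs) \<le> \<rho>1 \<Longrightarrow> x k \<in> M \<Longrightarrow>
      x (Suc k) \<in> M \<and> dd (x (Suc k)) \<le> Q * (dd (x k))\<^sup>2 \<and> norm (x (Suc k) - x k) \<le> Cd * dd (x k)"
    and Q: "Q \<ge> 0" and Cd: "Cd \<ge> 0" and dd0: "\<And>y. dd y \<ge> 0"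
    and x0: "x 0 \<in> M" "norm (x 0 - xs) = dd (x 0)" "dd (x 0) < \<delta>"
    and \<delta>1: "(1 + 2 * Cd) * \<delta> \<le> \<rho>1" and \<delta>2: "Q * \<delta> \<le> 1/2"
  shows "(\<forall>k. x k \<in> M \<and> norm (x k - xs) \<le> \<rho>1 \<and> dd (x k) \<le> dd (x 0) * (1/2)^k
           \<and> dd (x (Suc k)) \<le> Q * (dd (x k))\<^sup>2) \<and>
         (\<exists>xh. x \<longlonglongrightarrow> xh \<and> (\<forall>k. norm (x k - xh) \<le> 2 * Cd * dd (x k)))"
proof -
  define d0 where "d0 = dd (x 0)"
  have d00: "d0 \<ge> 0" unfolding d0_def by (rule dd0)
  have inv: "x k \<in> M \<and> dd (x k) \<le> d0 * (1/2)^k \<and> norm (x k - x 0) \<le> 2 * Cd * d0 * (1 - (1/2)^k)" for k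
  proof (induction k)
    case 0 then show ?case using x0 unfolding d0_def by simp
  next
    case (Suc k)
    have pk: "(1/2::real)^k \<le> 1" by (simp add: power_le_one)
    have pk0: "(1/2::real)^k \<ge> 0" by simp
    have "norm (x k - xs) \<le> norm (x k - x 0) + norm (x 0 - xs)" by (rule tri3)
    also have "\<dots> \<le> 2 * Cd * d0 + d0"
    proof -
      have "2 * Cd * d0 * (1 - (1/2)^k) \<le> 2 * Cd * d0" using Cd d00 pk0
        by (simp add: mult_left_le)
      then show ?thesis using Suc.IH x0(2) unfolding d0_def by linarith
    qed
    also have "\<dots> = (1 + 2 * Cd) * d0" by (simp add: algebra_simps)
    also have "\<dots> \<le> (1 + 2 * Cd) * \<delta>" using x0(3) Cd unfolding d0_def by (intro mult_left_mono) auto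
    also have "\<dots> \<le> \<rho>1" by (rule \<delta>1)
    finally have near: "norm (x k - xs) \<le> \<rho>1" .
    note st = step[OF near conjunct1[OF Suc.IH]]
    have dk: "dd (x k) \<le> d0 * (1/2)^k" using Suc.IH by blast
    have dkd: "dd (x k) \<le> \<delta>"
    proof -
      have "d0 * (1/2)^k \<le> d0" using d00 pk by (simp add: mult_left_le)
      then show ?thesis using dk x0(3) unfolding d0_def by linarith
    qed
    have "dd (x (Suc k)) \<le> Q * (dd (x k))\<^sup>2" using st by blast
    also have "\<dots> = (Q * dd (x k)) * dd (x k)" by (simp add: power2_eq_square)
    also have "\<dots> \<le> (Q * \<delta>) * dd (x k)" using dkd Q dd0 by (intro mult_right_mono mult_left_mono) auto
    also have "\<dots> \<le> (1/2) * dd (x k)" using \<delta>2 dd0 by (intro mult_right_mono) auto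
    also have "\<dots> \<le> (1/2) * (d0 * (1/2)^k)" using dk by simp
    finally have c2: "dd (x (Suc k)) \<le> d0 * (1/2)^(Suc k)" by simp
    have "norm (x (Suc k) - x 0) \<le> norm (x (Suc k) - x k) + norm (x k - x 0)" by (rule tri3)
    also have "\<dots> \<le> Cd * (d0 * (1/2)^k) + 2 * Cd * d0 * (1 - (1/2)^k)"
      using st Suc.IH mult_left_mono[OF dk Cd] by linarith
    also have "\<dots> = 2 * Cd * d0 * (1 - (1/2)^(Suc k))" by (simp add: algebra_simps)
    finally show ?case using st c2 by blast
  qed
  have near: "norm (x k - xs) \<le> \<rho>1" for k
  proof -
    have pk0: "(1/2::real)^k \<ge> 0" by simp
    have "norm (x k - xs) \<le> norm (x k - x 0) + norm (x 0 - xs)" by (rule tri3)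
    also have "\<dots> \<le> 2 * Cd * d0 + d0"
    proof -
      have "2 * Cd * d0 * (1 - (1/2)^k) \<le> 2 * Cd * d0" using Cd d00 pk0
        by (simp add: mult_left_le)
      then show ?thesis using inv[of k] x0(2) unfolding d0_def by linarith
    qed
    also have "\<dots> = (1 + 2 * Cd) * d0" by (simp add: algebra_simps)
    also have "\<dots> \<le> (1 + 2 * Cd) * \<delta>" using x0(3) Cd unfolding d0_def by (intro mult_left_mono) auto
    also have "\<dots> \<le> \<rho>1" by (rule \<delta>1)
    finally show ?thesis .
  qed
  have stp: "x (Suc k) \<in> M \<and> dd (x (Suc k)) \<le> Q * (dd (x k))\<^sup>2 \<and> norm (x (Suc k) - x k) \<le> Cd * dd (x k)" for k
    using step[OF near] inv by blast
  have rel: "norm (x (k + i) - x k) \<le> 2 * Cd * dd (x k) * (1 - (1/2)^i) \<and> dd (x (k + i)) \<le> dd (x k) * (1/2)^i" for k i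
  proof (induction i)
    case 0 then show ?case by simp
  next
    case (Suc i)
    have dk: "dd (x (k + i)) \<le> dd (x k) * (1/2)^i" using Suc.IH by blast
    have dkd: "dd (x (k + i)) \<le> \<delta>"
    proof -
      have "dd (x k) \<le> d0 * (1/2)^k" using inv by blast
      also have "\<dots> \<le> d0" using d00 by (simp add: mult_left_le power_le_one)
      finally have a: "dd (x k) \<le> d0" .
      have "dd (x k) * (1/2)^i \<le> dd (x k)" using dd0 by (simp add: mult_left_le power_le_one)
      then show ?thesis using dk a x0(3) unfolding d0_def by linarith
    qed
    have "dd (x (k + Suc i)) \<le> Q * (dd (x (k + i)))\<^sup>2" using stp[of "k + i"] by simp
    also have "\<dots> = (Q * dd (x (k + i))) * dd (x (k + i))" by (simp add: power2_eq_square)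
    also have "\<dots> \<le> (Q * \<delta>) * dd (x (k + i))" using dkd Q dd0 by (intro mult_right_mono mult_left_mono) auto
    also have "\<dots> \<le> (1/2) * dd (x (k + i))" using \<delta>2 dd0 by (intro mult_right_mono) auto
    also have "\<dots> \<le> (1/2) * (dd (x k) * (1/2)^i)" using dk by simp
    finally have c2: "dd (x (k + Suc i)) \<le> dd (x k) * (1/2)^(Suc i)" by simp
    have "norm (x (k + Suc i) - x k) \<le> norm (x (k + Suc i) - x (k + i)) + norm (x (k + i) - x k)" by (rule tri3)
    also have "\<dots> \<le> Cd * (dd (x k) * (1/2)^i) + 2 * Cd * dd (x k) * (1 - (1/2)^i)"
      using stp[of "k + i"] Suc.IH mult_left_mono[OF dk Cd] by simp
    also have "\<dots> = 2 * Cd * dd (x k) * (1 - (1/2)^(Suc i))" by (simp add: algebra_simps)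
    finally show ?case using c2 by blast
  qed
  have relb: "norm (x m - x k) \<le> 2 * Cd * dd (x k)" if mk: "m \<ge> k" for m k
  proof -
    obtain i where m: "m = k + i" using le_Suc_ex[OF mk] by blast
    have h1: "2 * Cd * dd (x k) * (1 - (1/2)^i) \<le> 2 * Cd * dd (x k)"
    proof (rule mult_left_le)
      show "1 - (1/2::real)^i \<le> 1" by simp
      show "0 \<le> 2 * Cd * dd (x k)" using Cd dd0[of "x k"] by simp
    qed
    show ?thesis unfolding m using rel[of k i] h1 by linarith
  qed
  have "Cauchy x"
  proof (rule CauchyI)
    fix e :: real assume e: "e > 0"
    have "4 * Cd * d0 \<ge> 0" using Cd d00 by simp
    then obtain N where N: "\<forall>k\<ge>N. (4 * Cd * d0) * (1/2)^k < e" using half_pow_small[OF e] by blast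
    have "norm (x m - x n) < e" if "m \<ge> N" "n \<ge> N" for m n
    proof -
      have "norm (x m - x n) \<le> norm (x m - x N) + norm (x N - x n)" by (rule tri3)
      also have "\<dots> \<le> 2 * Cd * dd (x N) + 2 * Cd * dd (x N)"
        using relb[OF that(1)] relb[OF that(2)] by (simp add: norm_minus_commute)
      also have "\<dots> = 4 * Cd * dd (x N)" by simp
      also have "\<dots> \<le> 4 * Cd * (d0 * (1/2)^N)" using inv[of N] Cd by (intro mult_left_mono) auto
      also have "\<dots> < e" using N by (simp add: mult.assoc)
      finally show ?thesis .
    qed
    then show "\<exists>M. \<forall>m\<ge>M. \<forall>n\<ge>M. norm (x m - x n) < e" by blast
  qed
  then obtain xh where xh: "x \<longlonglongrightarrow> xh" using Cauchy_convergent_iff convergent_def by blast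
  have "norm (x k - xh) \<le> 2 * Cd * dd (x k)" for k
  proof -
    have "(\<lambda>m. x m - x k) \<longlonglongrightarrow> xh - x k" using xh by (intro tendsto_diff tendsto_const)
    moreover have "eventually (\<lambda>m. norm (x m - x k) \<le> 2 * Cd * dd (x k)) sequentially"
      using relb by (auto simp: eventually_sequentially)
    ultimately have "norm (xh - x k) \<le> 2 * Cd * dd (x k)" by (intro Lim_norm_ubound) auto
    then show ?thesis by (simp add: norm_minus_commute)
  qed
  then show ?thesis using inv near stp xh unfolding d0_def by blast
qed



theorem theorem5p4:
  fixes F :: "real^'n \<Rightarrow> real^'n" and M :: "(real^'n) set"
    and q L3 :: real and xs :: "real^'n"
  assumes F_loc: "locally_lipschitz F"
    and M_sm: "smooth_embedded_submanifold M"
    and q: "1 < q" "q \<le> 2" and L3: "L3 > 0"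
    and xs_sol: "xs \<in> {z. F z = 0} \<inter> M"
    and A1: "A1 F M xs" and A2: "A2 F M xs" and A3: "A3 F M xs"
  shows "\<exists>\<delta>>0. \<forall>(x::nat \<Rightarrow> real^'n) J d r.
     x 0 \<in> M \<and> infdist (x 0) ({z. F z = 0} \<inter> M) < \<delta> \<and>
     dist (x 0) xs = infdist (x 0) ({z. F z = 0} \<inter> M) \<and>
     (\<forall>k. F (x k) = 0 \<longrightarrow> x (Suc k) = x k) \<and>
     (\<forall>k. F (x k) \<noteq> 0 \<longrightarrow>
        J k \<in> B_jac F (x k) \<and>
        (J k ** tangent_proj M (x k) + norm (F (x k)) *\<^sub>R mat 1) *v d k = - F (x k) + r k \<and>
        norm (r k) / norm (F (x k)) \<le> L3 * norm (F (x k)) powr q \<and>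
        x (Suc k) \<in> M \<and> dist (x k + d k) (x (Suc k)) = infdist (x k + d k) M)
     \<longrightarrow> (\<exists>xh \<in> {z. F z = 0} \<inter> M. x \<longlonglongrightarrow> xh \<and>
            (\<lambda>k. norm (x (Suc k) - xh)) \<in> o(\<lambda>k. norm (x k - xh)))"
proof -
  define Z where "Z = {z. F z = 0} \<inter> M"
  have xsZ: "xs \<in> Z" using xs_sol unfolding Z_def .
  have xsM: "xs \<in> M" using xs_sol by simp
  obtain b1 L2 L1 where b1: "b1 > 0" and L2: "L2 > 0" and lip: "L2-lipschitz_on (cball xs b1) F"
    and L1: "L1 > 0" and H1b: "\<forall>x\<in>M \<inter> cball xs b1. \<forall>y\<in>M \<inter> cball xs b1. \<forall>J\<in>B_jac F x.
        norm (F y - F x - J *v (y - x)) \<le> L1 * (norm (y - x))\<^sup>2"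
    using A1 unfolding A1_def by blast
  obtain b2 where b2: "b2 > 0" and H3b: "\<forall>x\<in>M \<inter> cball xs b2. \<forall>J\<in>B_jac F x. F x \<noteq> 0 \<longrightarrow>
     invertible (J ** tangent_proj M x + norm (F x) *\<^sub>R mat 1) \<and>
     mnorm (matrix_inv (J ** tangent_proj M x + norm (F x) *\<^sub>R mat 1)) \<le> 1 / norm (F x)"
    using A2 unfolding A2_def by blast
  obtain b3 \<gamma> where b3: "b3 > 0" and \<gamma>: "\<gamma> > 0" and H4b: "\<forall>x\<in>M \<inter> cball xs b3.
     norm (F x) \<ge> \<gamma> * infdist x Z"
    using A3 unfolding A3_def Z_def by blast
  obtain \<rho>g C1 C2 where \<rho>g: "\<rho>g > 0" and clo: "closed (M \<inter> cball xs \<rho>g)"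
    and G1b: "\<forall>x\<in>M \<inter> cball xs \<rho>g. \<forall>y\<in>M \<inter> cball xs \<rho>g.
        norm ((y - x) - tangent_proj M x *v (y - x)) \<le> C1 * (norm (y - x))\<^sup>2"
    and G2b: "\<forall>x\<in>M \<inter> cball xs \<rho>g. \<forall>z\<in>M \<inter> cball xs \<rho>g. \<forall>w. (\<forall>m\<in>M. norm (w - z) \<le> norm (w - m)) \<longrightarrow>
        norm (tangent_proj M x *v (w - z)) \<le> C2 * norm (x - z) * norm (w - z)"
    using chart_geometry[OF M_sm xsM] by blast
  define \<rho> where "\<rho> = min (min (b1 / 2) b2) (min b3 \<rho>g)"
  have \<rho>: "\<rho> > 0" unfolding \<rho>_def using b1 b2 b3 \<rho>g by simp
  have sub1: "cball xs \<rho> \<subseteq> cball xs b1" and sub2: "cball xs \<rho> \<subseteq> cball xs b2"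
    and sub3: "cball xs \<rho> \<subseteq> cball xs b3" and subg: "cball xs \<rho> \<subseteq> cball xs \<rho>g"
    and subb: "cball xs \<rho> \<subseteq> ball xs b1"
    unfolding \<rho>_def using b1 by (auto simp: subset_eq)
  have lipF: "norm (F a - F b) \<le> L2 * norm (a - b)" if "a \<in> cball xs b1" "b \<in> cball xs b1" for a b
    using lipschitz_onD[OF lip that] by (simp add: dist_norm)
  define C1' where "C1' = max C1 0"
  define C2' where "C2' = max C2 0"
  have C1': "C1' \<ge> 0" and C2': "C2' \<ge> 0" unfolding C1'_def C2'_def by auto
  have H1: "\<forall>x\<in>M \<inter> cball xs \<rho>. \<forall>y\<in>M \<inter> cball xs \<rho>. \<forall>J\<in>B_jac F x.
        norm (F y - F x - J *v (y - x)) \<le> L1 * (norm (y - x))\<^sup>2"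
    using H1b sub1 by blast
  have H2: "\<forall>x\<in>M \<inter> cball xs \<rho>. \<forall>J\<in>B_jac F x. \<forall>v. norm (J *v v) \<le> L2 * norm v"
  proof (intro ballI allI)
    fix x J v assume x: "x \<in> M \<inter> cball xs \<rho>" and J: "J \<in> B_jac F x"
    show "norm (J *v v) \<le> L2 * norm v"
    proof (rule bjac_bound[OF J open_ball])
      show "x \<in> ball xs b1" using x subb by blast
      fix a b assume "a \<in> ball xs b1" "b \<in> ball xs b1"
      then show "norm (F a - F b) \<le> L2 * norm (a - b)" using lipF by auto
    qed
  qed
  have H2': "\<forall>x\<in>cball xs \<rho>. \<forall>y\<in>cball xs \<rho>. norm (F x - F y) \<le> L2 * norm (x - y)"
    using lipF sub1 by blast
  have H3: "\<forall>x\<in>M \<inter> cball xs \<rho>. \<forall>J\<in>B_jac F x. F x \<noteq> 0 \<longrightarrow>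
        (\<forall>u. norm (F x) * norm u \<le> norm ((J ** tangent_proj M x + norm (F x) *\<^sub>R mat 1) *v u))"
  proof (intro ballI impI allI)
    fix x J u assume x: "x \<in> M \<inter> cball xs \<rho>" and J: "J \<in> B_jac F x" and Fx: "F x \<noteq> 0"
    have "x \<in> M \<inter> cball xs b2" using x sub2 by blast
    then have "invertible (J ** tangent_proj M x + norm (F x) *\<^sub>R mat 1) \<and>
     mnorm (matrix_inv (J ** tangent_proj M x + norm (F x) *\<^sub>R mat 1)) \<le> 1 / norm (F x)"
      using H3b J Fx by blast
    then show "norm (F x) * norm u \<le> norm ((J ** tangent_proj M x + norm (F x) *\<^sub>R mat 1) *v u)"
      using inv_lower_bound[of "J ** tangent_proj M x + norm (F x) *\<^sub>R mat 1" "norm (F x)" u] Fx by simp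
  qed
  have H4: "\<forall>x\<in>M \<inter> cball xs \<rho>. \<gamma> * infdist x Z \<le> norm (F x)" using H4b sub3 by blast
  have G1: "\<forall>x\<in>M \<inter> cball xs \<rho>. \<forall>y\<in>M \<inter> cball xs \<rho>.
        norm ((y - x) - tangent_proj M x *v (y - x)) \<le> C1' * (norm (y - x))\<^sup>2"
  proof (intro ballI)
    fix x y assume "x \<in> M \<inter> cball xs \<rho>" "y \<in> M \<inter> cball xs \<rho>"
    then have "norm ((y - x) - tangent_proj M x *v (y - x)) \<le> C1 * (norm (y - x))\<^sup>2" using G1b subg by blast
    also have "\<dots> \<le> C1' * (norm (y - x))\<^sup>2" unfolding C1'_def by (intro mult_right_mono) auto
    finally show "norm ((y - x) - tangent_proj M x *v (y - x)) \<le> C1' * (norm (y - x))\<^sup>2" .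
  qed
  have G2: "\<forall>x\<in>M \<inter> cball xs \<rho>. \<forall>z\<in>M \<inter> cball xs \<rho>. \<forall>w. (\<forall>m\<in>M. norm (w - z) \<le> norm (w - m)) \<longrightarrow>
        norm (tangent_proj M x *v (w - z)) \<le> C2' * norm (x - z) * norm (w - z)"
  proof (intro ballI allI impI)
    fix x z w assume "x \<in> M \<inter> cball xs \<rho>" "z \<in> M \<inter> cball xs \<rho>" "\<forall>m\<in>M. norm (w - z) \<le> norm (w - m)"
    then have "norm (tangent_proj M x *v (w - z)) \<le> C2 * norm (x - z) * norm (w - z)" using G2b subg by blast
    also have "\<dots> \<le> C2' * norm (x - z) * norm (w - z)" unfolding C2'_def
      by (intro mult_right_mono) auto
    finally show "norm (tangent_proj M x *v (w - z)) \<le> C2' * norm (x - z) * norm (w - z)" .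
  qed
  define Cd0 where "Cd0 = 2 * (L1 + L2 * C1' + L3 * L2\<^sup>2) / \<gamma> + 2"
  define K2 where "K2 = 4 * L1 * Cd0\<^sup>2 + L3 * L2\<^sup>2 + L2 * Cd0 + 2 * L2 * C2' * Cd0\<^sup>2 + 4 * L2 * C1' * Cd0\<^sup>2"
  define \<rho>1 where "\<rho>1 = min (\<rho> / (3 + 4 * Cd0)) (1 / L2)"
  have Cd0: "Cd0 \<ge> 2" unfolding Cd0_def using L1 L2 C1' L3 \<gamma> by simp
  have K2: "K2 \<ge> 0" unfolding K2_def using L1 L2 L3 C1' C2' Cd0 by simp
  have \<rho>1: "\<rho>1 > 0" unfolding \<rho>1_def using \<rho> Cd0 L2 by simp
  have \<rho>1\<rho>: "\<rho>1 \<le> \<rho>"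
  proof -
    have "\<rho> / (3 + 4 * Cd0) \<le> \<rho>" using \<rho> Cd0 by (simp add: divide_le_eq)
    then show ?thesis unfolding \<rho>1_def by linarith
  qed
  define Q where "Q = 4 * K2 / \<gamma>"
  define Cd where "Cd = 4 * Cd0"
  have Q: "Q \<ge> 0" unfolding Q_def using K2 \<gamma> by simp
  have Cd: "Cd \<ge> 0" unfolding Cd_def using Cd0 by simp
  define \<delta> where "\<delta> = min (\<rho>1 / (1 + 2 * Cd)) (1 / (2 * Q + 1))"
  have \<delta>: "\<delta> > 0" unfolding \<delta>_def using \<rho>1 Cd Q by simp
  have \<delta>1: "(1 + 2 * Cd) * \<delta> \<le> \<rho>1"
  proof -
    have "\<delta> \<le> \<rho>1 / (1 + 2 * Cd)" unfolding \<delta>_def by simp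
    then show ?thesis using Cd by (simp add: le_divide_eq mult.commute)
  qed
  have \<delta>2: "Q * \<delta> \<le> 1/2"
  proof -
    have "\<delta> \<le> 1 / (2 * Q + 1)" unfolding \<delta>_def by simp
    then have "Q * \<delta> \<le> Q * (1 / (2 * Q + 1))" using Q by (intro mult_left_mono) auto
    also have "\<dots> \<le> 1/2" using Q by (simp add: divide_le_eq)
    finally show ?thesis .
  qed
  show ?thesis
  proof (intro exI[of _ \<delta>] conjI \<delta> allI impI)
    fix x :: "nat \<Rightarrow> real^'n" and J d r
    assume hyp: "x 0 \<in> M \<and> infdist (x 0) ({z. F z = 0} \<inter> M) < \<delta> \<and>
     dist (x 0) xs = infdist (x 0) ({z. F z = 0} \<inter> M) \<and>
     (\<forall>k. F (x k) = 0 \<longrightarrow> x (Suc k) = x k) \<and>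
     (\<forall>k. F (x k) \<noteq> 0 \<longrightarrow>
        J k \<in> B_jac F (x k) \<and>
        (J k ** tangent_proj M (x k) + norm (F (x k)) *\<^sub>R mat 1) *v d k = - F (x k) + r k \<and>
        norm (r k) / norm (F (x k)) \<le> L3 * norm (F (x k)) powr q \<and>
        x (Suc k) \<in> M \<and> dist (x k + d k) (x (Suc k)) = infdist (x k + d k) M)"
    have x0M: "x 0 \<in> M" and x0d: "infdist (x 0) Z < \<delta>" and x0xs: "norm (x 0 - xs) = infdist (x 0) Z"
      using hyp unfolding Z_def by (auto simp: dist_norm)
    have zero: "\<And>k. F (x k) = 0 \<Longrightarrow> x (Suc k) = x k" using hyp by blast
    have nz: "\<And>k. F (x k) \<noteq> 0 \<Longrightarrow> J k \<in> B_jac F (x k) \<and>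
        (J k ** tangent_proj M (x k) + norm (F (x k)) *\<^sub>R mat 1) *v d k = - F (x k) + r k \<and>
        norm (r k) / norm (F (x k)) \<le> L3 * norm (F (x k)) powr q \<and>
        x (Suc k) \<in> M \<and> dist (x k + d k) (x (Suc k)) = infdist (x k + d k) M" using hyp by blast
    have step: "x (Suc k) \<in> M \<and> infdist (x (Suc k)) Z \<le> Q * (infdist (x k) Z)\<^sup>2 \<and>
        norm (x (Suc k) - x k) \<le> Cd * infdist (x k) Z"
      if near: "norm (x k - xs) \<le> \<rho>1" and xkM: "x k \<in> M" for k
    proof (cases "F (x k) = 0")
      case True
      then have "x (Suc k) = x k" using zero by blast
      moreover have "infdist (x k) Z = 0" using True xkM unfolding Z_def by simp
      ultimately show ?thesis using xkM by simp
    next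
      case False
      note h = nz[OF False]
      have "infdist (x (Suc k)) Z \<le> (4 * K2 / \<gamma>) * (infdist (x k) Z)\<^sup>2 \<and> norm (x (Suc k) - x k) \<le> 4 * Cd0 * infdist (x k) Z"
      proof (rule step_core[OF Z_def xsZ \<rho> less_imp_le[OF L1] L2 C1' C2' \<gamma> L3 _ H1 H2 H2' H3 H4 G1 G2
            Cd0_def K2_def \<rho>1_def xkM near False])
        show "1 \<le> q" using q by simp
      qed (use h in auto)
      then show ?thesis using h unfolding Q_def Cd_def by blast
    qed
    have sc: "(\<forall>k. x k \<in> M \<and> norm (x k - xs) \<le> \<rho>1 \<and> infdist (x k) Z \<le> infdist (x 0) Z * (1/2)^k
           \<and> infdist (x (Suc k)) Z \<le> Q * (infdist (x k) Z)\<^sup>2) \<and>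
         (\<exists>xh. x \<longlonglongrightarrow> xh \<and> (\<forall>k. norm (x k - xh) \<le> 2 * Cd * infdist (x k) Z))"
      by (rule seq_conv[where dd = "\<lambda>y. infdist y Z", OF step Q Cd infdist_nonneg x0M x0xs x0d \<delta>1 \<delta>2])
    then obtain xh where xh: "x \<longlonglongrightarrow> xh" and xhb: "\<And>k. norm (x k - xh) \<le> 2 * Cd * infdist (x k) Z"
      by blast
    have inv: "\<And>k. x k \<in> M \<and> norm (x k - xs) \<le> \<rho>1" and dk: "\<And>k. infdist (x k) Z \<le> infdist (x 0) Z * (1/2)^k"
      and dS: "\<And>k. infdist (x (Suc k)) Z \<le> Q * (infdist (x k) Z)\<^sup>2"
      using sc by blast+
    define d0 where "d0 = infdist (x 0) Z"
    have d00: "d0 \<ge> 0" unfolding d0_def by (rule infdist_nonneg)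
    have "xh \<in> M \<inter> cball xs \<rho>g \<inter> cball xs \<rho>1"
    proof (rule Lim_in_closed_set[OF _ _ _ xh])
      show "closed (M \<inter> cball xs \<rho>g \<inter> cball xs \<rho>1)" by (rule closed_Int[OF clo closed_cball])
      show "eventually (\<lambda>k. x k \<in> M \<inter> cball xs \<rho>g \<inter> cball xs \<rho>1) sequentially"
      proof (rule always_eventually, rule allI)
        fix k
        have "x k \<in> cball xs \<rho>1" using inv[of k] by (simp add: dist_norm norm_minus_commute)
        moreover have "x k \<in> cball xs \<rho>" using \<open>x k \<in> cball xs \<rho>1\<close> \<rho>1\<rho> by auto
        ultimately show "x k \<in> M \<inter> cball xs \<rho>g \<inter> cball xs \<rho>1" using inv[of k] subg by blast
      qed
    qed simp
    then have xhM: "xh \<in> M" and xhb1: "xh \<in> cball xs \<rho>" using \<rho>1\<rho> by auto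
    have idz: "infdist xh Z = 0"
    proof (rule ccontr)
      assume "infdist xh Z \<noteq> 0"
      then have pos: "infdist xh Z > 0" using infdist_nonneg[of xh Z] by simp
      obtain N where N: "\<forall>k\<ge>N. ((1 + 2 * Cd) * d0) * (1/2)^k < infdist xh Z"
        using half_pow_small[OF pos, of "(1 + 2 * Cd) * d0"] Cd d00 by auto
      have "infdist xh Z \<le> infdist (x N) Z + dist xh (x N)" by (rule infdist_triangle)
      also have "\<dots> \<le> infdist (x N) Z + 2 * Cd * infdist (x N) Z"
        using xhb[of N] by (simp add: dist_norm norm_minus_commute)
      also have "\<dots> = (1 + 2 * Cd) * infdist (x N) Z" by (simp add: algebra_simps)
      also have "\<dots> \<le> (1 + 2 * Cd) * (d0 * (1/2)^N)" using dk[of N] Cd unfolding d0_def by (intro mult_left_mono) auto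
      also have "\<dots> < infdist xh Z" using N by (simp add: mult.assoc)
      finally show False by simp
    qed
    have Fxh: "F xh = 0"
    proof (rule ccontr)
      assume Fne: "F xh \<noteq> 0"
      define \<epsilon> where "\<epsilon> = min (norm (F xh) / L2) (b1 / 2)"
      have \<epsilon>: "\<epsilon> > 0" unfolding \<epsilon>_def using Fne L2 b1 by simp
      have Zne: "Z \<noteq> {}" using xsZ by blast
      obtain a where a: "a \<in> Z" "dist xh a < \<epsilon>" using infdist_lessE[OF Zne, of xh \<epsilon>] idz \<epsilon> by auto
      have "norm (a - xs) \<le> norm (a - xh) + norm (xh - xs)" by (rule tri3)
      also have "\<dots> \<le> b1" using a(2) xhb1 unfolding \<epsilon>_def \<rho>_def
        by (simp add: dist_norm norm_minus_commute)
      finally have aB: "a \<in> cball xs b1" by (simp add: dist_norm norm_minus_commute)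
      have "xh \<in> cball xs b1" using xhb1 sub1 by blast
      then have "norm (F xh - F a) \<le> L2 * norm (xh - a)" using lipF aB by blast
      also have "\<dots> < L2 * (norm (F xh) / L2)" using a(2) L2 unfolding \<epsilon>_def
        by (intro mult_strict_left_mono) (auto simp: dist_norm)
      finally show False using a(1) L2 unfolding Z_def by simp
    qed
    have xhZ: "xh \<in> Z" unfolding Z_def using Fxh xhM by simp
    have small: "(\<lambda>k. norm (x (Suc k) - xh)) \<in> o(\<lambda>k. norm (x k - xh))"
    proof (rule landau_o.smallI)
      fix c :: real assume c: "c > 0"
      have "2 * Cd * Q * d0 \<ge> 0" using Cd Q d00 by simp
      then obtain N where N: "\<forall>k\<ge>N. (2 * Cd * Q * d0) * (1/2)^k < c" using half_pow_small[OF c] by blast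
      have "norm (norm (x (Suc k) - xh)) \<le> c * norm (norm (x k - xh))" if "k \<ge> N" for k
      proof -
        define dk' where "dk' = infdist (x k) Z"
        have dk'0: "dk' \<ge> 0" unfolding dk'_def by (rule infdist_nonneg)
        have "norm (x (Suc k) - xh) \<le> 2 * Cd * infdist (x (Suc k)) Z" by (rule xhb)
        also have "\<dots> \<le> 2 * Cd * (Q * dk'\<^sup>2)" using dS[of k] Cd unfolding dk'_def by (intro mult_left_mono) auto
        also have "\<dots> = (2 * Cd * Q * dk') * dk'" by (simp add: power2_eq_square)
        also have "\<dots> \<le> (2 * Cd * Q * (d0 * (1/2)^k)) * dk'"
          using dk[of k] Cd Q dk'0 unfolding dk'_def d0_def by (intro mult_right_mono mult_left_mono) auto
        also have "\<dots> \<le> c * dk'" using N that dk'0 by (intro mult_right_mono) (auto simp: mult.assoc)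
        also have "\<dots> \<le> c * norm (x k - xh)"
          using infdist_le[OF xhZ, of "x k"] c unfolding dk'_def by (intro mult_left_mono) (auto simp: dist_norm)
        finally show ?thesis by simp
      qed
      then show "eventually (\<lambda>k. norm (norm (x (Suc k) - xh)) \<le> c * norm (norm (x k - xh))) at_top"
        by (auto simp: eventually_at_top_linorder)
    qed
    show "\<exists>xh \<in> {z. F z = 0} \<inter> M. x \<longlonglongrightarrow> xh \<and> (\<lambda>k. norm (x (Suc k) - xh)) \<in> o(\<lambda>k. norm (x k - xh))"
      using xhZ xh small unfolding Z_def by blast
  qed
qed

end
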